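(* Let $X,E,F$ be Banach spaces, $B\subset X$ an open ball, $\xi\in\partial B$, and $P:B\to\mathrm{Hom}(E,F)$ a holomorphic function. If for every $e\in E$ the function $Pe:B\to F$ analytically continues across $\xi$ (i.e. to a holomorphic function on $B\cup W$ for some neighborhood $W$ of $\xi$), then $P$ itself analytically continues across $\xi$.
   Context: $\mathrm{Hom}(E,F)$ is the Banach space of bounded linear operators $E\to F$ with the operator norm. *)

theory Defs
  imports "HOL-Analysis.Analysis"
begin

text \<open>The Isabelle/HOL distribution has no class of complex vector spaces, so we
introduce complex Banach spaces as real Banach spaces equipped with a complex scalar
multiplication that extends the real one and is compatible with the norm.\<close>

class complex_banach = banach +
  fixes scaleC :: "complex \<Rightarrow> 'a \<Rightarrow> 'a" (infixr \<open>*\<^sub>C\<close> 75)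
  assumes scaleC_add_right: "c *\<^sub>C (x + y) = c *\<^sub>C x + c *\<^sub>C y"
    and scaleC_add_left: "(a + b) *\<^sub>C x = a *\<^sub>C x + b *\<^sub>C x"
    and scaleC_scaleC: "a *\<^sub>C (b *\<^sub>C x) = (a * b) *\<^sub>C x"
    and scaleC_of_real: "complex_of_real r *\<^sub>C x = r *\<^sub>R x"
    and norm_scaleC: "norm (c *\<^sub>C x) = cmod c * norm x"

lemma bounded_linear_scaleC_comp:
  fixes T :: "'a::real_normed_vector \<Rightarrow> 'b::complex_banach"
  assumes "bounded_linear T"
  shows "bounded_linear (\<lambda>e. c *\<^sub>C T e)"
proof -
  interpret T: bounded_linear T by fact
  obtain K where K: "\<And>x. norm (T x) \<le> norm x * K" using T.bounded by blast
  show ?thesis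
  proof (unfold_locales)
    fix x y show "c *\<^sub>C T (x + y) = c *\<^sub>C T x + c *\<^sub>C T y"
      by (simp add: T.add scaleC_add_right)
  next
    fix r x
    have "c *\<^sub>C T (r *\<^sub>R x) = c *\<^sub>C (complex_of_real r *\<^sub>C T x)"
      by (simp add: T.scale scaleC_of_real)
    also have "\<dots> = complex_of_real r *\<^sub>C (c *\<^sub>C T x)"
      by (simp add: scaleC_scaleC mult.commute)
    finally show "c *\<^sub>C T (r *\<^sub>R x) = r *\<^sub>R (c *\<^sub>C T x)"
      by (simp add: scaleC_of_real)
  next
    show "\<exists>K. \<forall>x. norm (c *\<^sub>C T x) \<le> norm x * K"
    proof (intro exI allI)
      fix x
      have "norm (c *\<^sub>C T x) = cmod c * norm (T x)" by (simp add: norm_scaleC)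
      also have "\<dots> \<le> cmod c * (norm x * K)" using K by (simp add: mult_left_mono)
      finally show "norm (c *\<^sub>C T x) \<le> norm x * (cmod c * K)" by (simp add: ac_simps)
    qed
  qed
qed

text \<open>The space Hom(E,F) of bounded
complex-linear operators is the (closed, complex) subspace of those operators commuting
with complex scaling (see is_hom below).\<close>

instantiation blinfun :: (real_normed_vector, complex_banach) complex_banach
begin

definition scaleC_blinfun :: "complex \<Rightarrow> ('a \<Rightarrow>\<^sub>L 'b) \<Rightarrow> ('a \<Rightarrow>\<^sub>L 'b)" where
  "scaleC_blinfun c T = Blinfun (\<lambda>e. c *\<^sub>C blinfun_apply T e)"

lemma blinfun_apply_scaleC: "blinfun_apply (c *\<^sub>C T) e = c *\<^sub>C blinfun_apply T e"
  unfolding scaleC_blinfun_def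
  by (simp add: bounded_linear_Blinfun_apply bounded_linear_scaleC_comp blinfun.bounded_linear_right)

instance
proof
  fix c a b :: complex and x y :: "'a \<Rightarrow>\<^sub>L 'b" and r :: real
  show "c *\<^sub>C (x + y) = c *\<^sub>C x + c *\<^sub>C y"
    by (rule blinfun_eqI) (simp add: blinfun_apply_scaleC blinfun.add_left scaleC_add_right)
  show "(a + b) *\<^sub>C x = a *\<^sub>C x + b *\<^sub>C x"
    by (rule blinfun_eqI) (simp add: blinfun_apply_scaleC blinfun.add_left scaleC_add_left)
  show "a *\<^sub>C (b *\<^sub>C x) = (a * b) *\<^sub>C x"
    by (rule blinfun_eqI) (simp add: blinfun_apply_scaleC scaleC_scaleC)
  show "complex_of_real r *\<^sub>C x = r *\<^sub>R x"
    by (rule blinfun_eqI) (simp add: blinfun_apply_scaleC scaleC_of_real blinfun.scaleR_left)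
  show "norm (c *\<^sub>C x) = cmod c * norm x"
  proof (rule antisym)
    show "norm (c *\<^sub>C x) \<le> cmod c * norm x"
      by (rule norm_blinfun_bound)
         (auto simp: blinfun_apply_scaleC norm_scaleC mult.assoc intro!: mult_left_mono norm_blinfun)
  next
    show "cmod c * norm x \<le> norm (c *\<^sub>C x)"
    proof (cases "c = 0")
      case True then show ?thesis by simp
    next
      case False
      have "x = inverse c *\<^sub>C (c *\<^sub>C x)"
        by (rule blinfun_eqI) (simp add: blinfun_apply_scaleC scaleC_scaleC False
              scaleC_of_real[of 1, simplified])
      have "norm x \<le> cmod (inverse c) * norm (c *\<^sub>C x)"
      proof (rule norm_blinfun_bound)
        fix e
        have "norm (blinfun_apply x e) = cmod (inverse c) * norm (blinfun_apply (c *\<^sub>C x) e)"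
          by (subst \<open>x = _\<close>) (simp add: blinfun_apply_scaleC norm_scaleC)
        also have "\<dots> \<le> cmod (inverse c) * (norm (c *\<^sub>C x) * norm e)"
          by (intro mult_left_mono norm_blinfun) simp
        finally show "norm (blinfun_apply x e) \<le> cmod (inverse c) * norm (c *\<^sub>C x) * norm e"
          by (simp add: mult.assoc)
      qed simp
      hence "norm x \<le> inverse (cmod c) * norm (c *\<^sub>C x)" by (simp add: norm_inverse)
      thus ?thesis using False by (simp add: field_simps)
    qed
  qed
qed

end

definition complex_linear :: "('a::complex_banach \<Rightarrow> 'b::complex_banach) \<Rightarrow> bool" where
  "complex_linear D \<longleftrightarrow> (\<forall>c h. D (c *\<^sub>C h) = c *\<^sub>C D h)"

definition banach_holomorphic_on ::
    "('a::complex_banach \<Rightarrow> 'b::complex_banach) \<Rightarrow> 'a set \<Rightarrow> bool" where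
  "banach_holomorphic_on f S \<longleftrightarrow>
     (\<forall>z\<in>S. \<exists>D. (f has_derivative D) (at z) \<and> complex_linear D)"

definition is_hom :: "('e::complex_banach \<Rightarrow>\<^sub>L 'f::complex_banach) \<Rightarrow> bool" where
  "is_hom T \<longleftrightarrow> complex_linear (blinfun_apply T)"

end

theory Submission
  imports Defs "HOL-Complex_Analysis.Complex_Analysis"
begin

definition hb_ok :: "'a::real_normed_vector \<Rightarrow> ('a \<times> real) set \<Rightarrow> bool" where
 "hb_ok y G \<longleftrightarrow> (\<forall>x a b. (x,a)\<in>G \<longrightarrow> (x,b)\<in>G \<longrightarrow> a = b) \<and>
   (\<forall>x a x' a'. (x,a)\<in>G \<longrightarrow> (x',a')\<in>G \<longrightarrow> (x+x', a+a')\<in>G) \<and>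
   (\<forall>x a t. (x,a)\<in>G \<longrightarrow> (t *\<^sub>R x, t*a)\<in>G) \<and>
   (\<forall>x a. (x,a)\<in>G \<longrightarrow> a \<le> norm x) \<and> (y, norm y) \<in> G"

lemma hb_fun: "hb_ok y G \<Longrightarrow> (x,a)\<in>G \<Longrightarrow> (x,b)\<in>G \<Longrightarrow> a = b"
  and hb_add: "hb_ok y G \<Longrightarrow> (x,a)\<in>G \<Longrightarrow> (x',a')\<in>G \<Longrightarrow> (x+x', a+a')\<in>G"
  and hb_scl: "hb_ok y G \<Longrightarrow> (x,a)\<in>G \<Longrightarrow> (t *\<^sub>R x, t*a)\<in>G"
  and hb_dom: "hb_ok y G \<Longrightarrow> (x,a)\<in>G \<Longrightarrow> a \<le> norm x"
  and hb_y: "hb_ok y G \<Longrightarrow> (y, norm y)\<in>G"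
  unfolding hb_ok_def by blast+

lemma hb_base: "hb_ok y {(t *\<^sub>R y, t * norm y) | t. True}"
  unfolding hb_ok_def
proof (intro conjI allI impI)
  fix x a b assume "(x,a) \<in> {(t *\<^sub>R y, t * norm y) | t. True}" "(x,b) \<in> {(t *\<^sub>R y, t * norm y) | t. True}"
  then obtain t t' where "x = t *\<^sub>R y" "a = t * norm y" "x = t' *\<^sub>R y" "b = t' * norm y" by blast
  show "a = b"
  proof (cases "y = 0")
    case True then show ?thesis using \<open>a = t * norm y\<close> \<open>b = t' * norm y\<close> by simp
  next
    case False
    have "t *\<^sub>R y = t' *\<^sub>R y" using \<open>x = t *\<^sub>R y\<close> \<open>x = t' *\<^sub>R y\<close> by metis
    then have "t = t'" using False by (metis scaleR_cancel_right)
    then show ?thesis using \<open>a = t * norm y\<close> \<open>b = t' * norm y\<close> by simp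
  qed
next
  fix x a x' a' assume "(x,a) \<in> {(t *\<^sub>R y, t * norm y) | t. True}" "(x',a') \<in> {(t *\<^sub>R y, t * norm y) | t. True}"
  then obtain t t' where "x = t *\<^sub>R y" "a = t * norm y" "x' = t' *\<^sub>R y" "a' = t' * norm y" by auto
  then show "(x+x', a+a') \<in> {(t *\<^sub>R y, t * norm y) | t. True}"
    by (auto intro!: exI[of _ "t+t'"] simp: scaleR_add_left distrib_right)
next
  fix x a s assume "(x,a) \<in> {(t *\<^sub>R y, t * norm y) | t. True}"
  then obtain t where "x = t *\<^sub>R y" "a = t * norm y" by auto
  then show "(s *\<^sub>R x, s*a) \<in> {(t *\<^sub>R y, t * norm y) | t. True}"
    by (auto intro!: exI[of _ "s*t"])
next
  fix x a assume "(x,a) \<in> {(t *\<^sub>R y, t * norm y) | t. True}"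
  then obtain t where "x = t *\<^sub>R y" "a = t * norm y" by auto
  then show "a \<le> norm x" by (simp add: mult_right_mono)
next
  show "(y, norm y) \<in> {(t *\<^sub>R y, t * norm y) | t. True}" by (auto intro!: exI[of _ 1])
qed

lemma hb_chain:
  assumes "C \<noteq> {}" "\<And>G. G \<in> C \<Longrightarrow> hb_ok y G" "\<And>G H. G \<in> C \<Longrightarrow> H \<in> C \<Longrightarrow> G \<subseteq> H \<or> H \<subseteq> G"
  shows "hb_ok y (\<Union>C)"
  unfolding hb_ok_def
proof (intro conjI allI impI)
  fix x a b assume "(x,a) \<in> \<Union>C" "(x,b) \<in> \<Union>C"
  then obtain G H where "G \<in> C" "H \<in> C" "(x,a)\<in>G" "(x,b)\<in>H" by auto
  from assms(3)[OF \<open>G\<in>C\<close> \<open>H\<in>C\<close>] have "(x,a)\<in>G \<and> (x,b)\<in>G \<or> (x,a)\<in>H \<and> (x,b)\<in>H"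
    using \<open>(x,a)\<in>G\<close> \<open>(x,b)\<in>H\<close> by blast
  then show "a = b" using hb_fun[OF assms(2)[OF \<open>G\<in>C\<close>]] hb_fun[OF assms(2)[OF \<open>H\<in>C\<close>]] by blast
next
  fix x a x' a' assume "(x,a) \<in> \<Union>C" "(x',a') \<in> \<Union>C"
  then obtain G H where "G \<in> C" "H \<in> C" "(x,a)\<in>G" "(x',a')\<in>H" by auto
  from assms(3)[OF \<open>G\<in>C\<close> \<open>H\<in>C\<close>] have "(x,a)\<in>G \<and> (x',a')\<in>G \<or> (x,a)\<in>H \<and> (x',a')\<in>H"
    using \<open>(x,a)\<in>G\<close> \<open>(x',a')\<in>H\<close> by blast
  then have "(x+x', a+a')\<in>G \<or> (x+x', a+a')\<in>H" using hb_add[OF assms(2)[OF \<open>G\<in>C\<close>]] hb_add[OF assms(2)[OF \<open>H\<in>C\<close>]] by blast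
  then show "(x+x', a+a') \<in> \<Union>C" using \<open>G\<in>C\<close> \<open>H\<in>C\<close> by blast
next
  fix x a s assume "(x,a) \<in> \<Union>C"
  then obtain G where "G \<in> C" "(x,a)\<in>G" by auto
  with hb_scl[OF assms(2)[of G]] show "(s *\<^sub>R x, s*a) \<in> \<Union>C" by blast
next
  fix x a assume "(x,a) \<in> \<Union>C"
  then obtain G where "G \<in> C" "(x,a)\<in>G" by auto
  with hb_dom[OF assms(2)[of G]] show "a \<le> norm x" by blast
next
  from assms(1) obtain G where "G \<in> C" by auto
  with hb_y[OF assms(2)[of G]] show "(y, norm y) \<in> \<Union>C" by blast
qed

lemma hb_extend:
  assumes M: "hb_ok y M" and x0: "\<And>a. (x0, a) \<notin> M"
  shows "\<exists>M'. hb_ok y M' \<and> M \<subseteq> M' \<and> M' \<noteq> M"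
proof -
  have fnc: "\<And>x a b. (x,a)\<in>M \<Longrightarrow> (x,b)\<in>M \<Longrightarrow> a = b"
   and add: "\<And>x a x' a'. (x,a)\<in>M \<Longrightarrow> (x',a')\<in>M \<Longrightarrow> (x+x', a+a')\<in>M"
   and scl: "\<And>x a t. (x,a)\<in>M \<Longrightarrow> (t *\<^sub>R x, t*a)\<in>M"
   and dom: "\<And>x a. (x,a)\<in>M \<Longrightarrow> a \<le> norm x"
   and yM: "(y, norm y) \<in> M" using M unfolding hb_ok_def by blast+
  have zero: "(0,0) \<in> M" using scl[OF yM, of 0] by simp
  define L where "L = {a - norm (x - x0) | x a. (x,a)\<in>M}"
  define c where "c = Sup L"
  have key: "a - norm (x - x0) \<le> norm (x' + x0) - a'" if "(x,a)\<in>M" "(x',a')\<in>M" for x a x' a'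
  proof -
    have "a + a' \<le> norm (x + x')" using dom[OF add[OF that]] .
    also have "x + x' = (x - x0) + (x' + x0)" by simp
    also have "norm \<dots> \<le> norm (x - x0) + norm (x' + x0)" by (rule norm_triangle_ineq)
    finally show ?thesis by simp
  qed
  have Lne: "L \<noteq> {}" using zero unfolding L_def by blast
  have Lbdd: "bdd_above L" unfolding L_def bdd_above_def using key[OF _ zero] by auto
  have c_ge: "a - norm (x - x0) \<le> c" if "(x,a)\<in>M" for x a
    unfolding c_def by (rule cSup_upper[OF _ Lbdd]) (use that in \<open>auto simp: L_def\<close>)
  have c_le: "c \<le> norm (x' + x0) - a'" if "(x',a')\<in>M" for x' a'
    unfolding c_def by (rule cSup_least[OF Lne]) (use key[OF _ that] in \<open>auto simp: L_def\<close>)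
  define M' where "M' = {(x + t *\<^sub>R x0, a + t * c) | x a t. (x,a)\<in>M}"
  have inv: "x0 = (1/(t'-t)) *\<^sub>R (x - x')" if "x + t *\<^sub>R x0 = x' + t' *\<^sub>R x0" "t \<noteq> t'" for x x' t t'
  proof -
    have "(t' - t) *\<^sub>R x0 = x - x'" using that(1) by (simp add: algebra_simps)
    then have "(1/(t'-t)) *\<^sub>R ((t' - t) *\<^sub>R x0) = (1/(t'-t)) *\<^sub>R (x - x')" by simp
    then show ?thesis using that(2) by simp
  qed
  have uniq: "t = t' \<and> x = x'" if "(x,a)\<in>M" "(x',a')\<in>M" "x + t *\<^sub>R x0 = x' + t' *\<^sub>R x0" for x a x' a' t t'
  proof (cases "t = t'")
    case True then show ?thesis using that by simp
  next
    case False
    have "(x + (-1) *\<^sub>R x', a + (-1)*a') \<in> M" using add[OF that(1) scl[OF that(2)]] .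
    then have "((1/(t'-t)) *\<^sub>R (x + (-1) *\<^sub>R x'), (1/(t'-t)) * (a + (-1)*a')) \<in> M" by (rule scl)
    then have "(x0, (1/(t'-t)) * (a + (-1)*a')) \<in> M" using inv[OF that(3) False] by simp
    then show ?thesis using x0 by blast
  qed
  have "hb_ok y M'" unfolding hb_ok_def
  proof (intro conjI allI impI)
    fix z a b assume "(z,a)\<in>M'" "(z,b)\<in>M'"
    then obtain x1 a1 t1 x2 a2 t2 where h: "(x1,a1)\<in>M" "(x2,a2)\<in>M" "z = x1 + t1 *\<^sub>R x0" "a = a1 + t1*c"
        "z = x2 + t2 *\<^sub>R x0" "b = a2 + t2*c" unfolding M'_def by blast
    have "x1 + t1 *\<^sub>R x0 = x2 + t2 *\<^sub>R x0" using h by simp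
    then have "t1 = t2 \<and> x1 = x2" using uniq[OF h(1,2)] by blast
    then show "a = b" using h fnc by auto
  next
    fix z a z' a' assume "(z,a)\<in>M'" "(z',a')\<in>M'"
    then obtain x1 a1 t1 x2 a2 t2 where h: "(x1,a1)\<in>M" "(x2,a2)\<in>M" "z = x1 + t1 *\<^sub>R x0" "a = a1 + t1*c"
        "z' = x2 + t2 *\<^sub>R x0" "a' = a2 + t2*c" unfolding M'_def by blast
    have "z + z' = (x1 + x2) + (t1 + t2) *\<^sub>R x0" "a + a' = (a1+a2) + (t1+t2)*c"
      using h by (auto simp: algebra_simps)
    then show "(z+z', a+a') \<in> M'" unfolding M'_def using add[OF h(1,2)] by blast
  next
    fix z a s assume "(z,a)\<in>M'"
    then obtain x1 a1 t1 where h: "(x1,a1)\<in>M" "z = x1 + t1 *\<^sub>R x0" "a = a1 + t1*c"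
      unfolding M'_def by blast
    have "s *\<^sub>R z = s *\<^sub>R x1 + (s*t1) *\<^sub>R x0" "s * a = s*a1 + (s*t1)*c"
      using h by (auto simp: algebra_simps)
    then show "(s *\<^sub>R z, s*a) \<in> M'" unfolding M'_def using scl[OF h(1)] by blast
  next
    fix z a assume "(z,a)\<in>M'"
    then obtain x a1 t where h: "(x,a1)\<in>M" "z = x + t *\<^sub>R x0" "a = a1 + t*c"
      unfolding M'_def by blast
    consider "t = 0" | "t > 0" | "t < 0" by linarith
    then show "a \<le> norm z"
    proof cases
      case 1 then show ?thesis using h dom by simp
    next
      case 2
      have "c \<le> norm ((1/t) *\<^sub>R x + x0) - (1/t)*a1" using c_le[OF scl[OF h(1), of "1/t"]] .
      also have "(1/t) *\<^sub>R x + x0 = (1/t) *\<^sub>R z" using h 2 by (simp add: algebra_simps)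
      finally have "c \<le> norm z / t - a1 / t" using 2 by simp
      then have "t * c \<le> norm z - a1" using 2 by (simp add: field_simps)
      then show ?thesis using h by simp
    next
      case 3
      define s where "s = -t"
      have s: "s > 0" using 3 s_def by simp
      have "(1/s)*a1 - norm ((1/s) *\<^sub>R x - x0) \<le> c" using c_ge[OF scl[OF h(1), of "1/s"]] .
      also have "(1/s) *\<^sub>R x - x0 = (1/s) *\<^sub>R z" using h s by (simp add: s_def algebra_simps)
      finally have "a1 / s - norm z / s \<le> c" using s by simp
      then have "a1 - norm z \<le> s * c" using s by (simp add: field_simps)
      then show ?thesis using h by (simp add: s_def)
    qed
  next
    show "(y, norm y) \<in> M'" unfolding M'_def using yM by force
  qed
  moreover have "M \<subseteq> M'" unfolding M'_def by force
  moreover have "(x0, c) \<in> M'" unfolding M'_def using zero by force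
  ultimately show ?thesis using x0 by blast
qed

lemma hahn_banach_norming:
  fixes y :: "'a::real_normed_vector"
  shows "\<exists>l. bounded_linear l \<and> (\<forall>x. \<bar>l x\<bar> \<le> norm x) \<and> l y = norm y"
proof -
  define A where "A = {G. hb_ok y G}"
  have "\<forall>C\<in>chains A. \<exists>U\<in>A. \<forall>X\<in>C. X \<subseteq> U"
  proof
    fix C assume C: "C \<in> chains A"
    show "\<exists>U\<in>A. \<forall>X\<in>C. X \<subseteq> U"
    proof (cases "C = {}")
      case True then show ?thesis using hb_base unfolding A_def by blast
    next
      case False
      have "hb_ok y (\<Union>C)"
        by (rule hb_chain[OF False]) (use C in \<open>auto simp: chains_def chain_subset_def A_def\<close>)
      then show ?thesis unfolding A_def by blast
    qed
  qed
  from Zorn_Lemma2[OF this] obtain M where M: "M \<in> A" and max: "\<forall>X\<in>A. M \<subseteq> X \<longrightarrow> X = M" by blast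
  have Mok: "hb_ok y M" using M A_def by simp
  have total: "\<exists>a. (x,a) \<in> M" for x
  proof (rule ccontr)
    assume "\<nexists>a. (x, a) \<in> M"
    then obtain M' where "hb_ok y M'" "M \<subseteq> M'" "M' \<noteq> M" using hb_extend[OF Mok] by blast
    then show False using max A_def by blast
  qed
  have fnc: "\<And>x a b. (x,a)\<in>M \<Longrightarrow> (x,b)\<in>M \<Longrightarrow> a = b"
   and add: "\<And>x a x' a'. (x,a)\<in>M \<Longrightarrow> (x',a')\<in>M \<Longrightarrow> (x+x', a+a')\<in>M"
   and scl: "\<And>x a t. (x,a)\<in>M \<Longrightarrow> (t *\<^sub>R x, t*a)\<in>M"
   and dom: "\<And>x a. (x,a)\<in>M \<Longrightarrow> a \<le> norm x"
   and yM: "(y, norm y) \<in> M" using Mok unfolding hb_ok_def by blast+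
  define l where "l x = (THE a. (x,a)\<in>M)" for x
  have lM: "(x, l x) \<in> M" for x
    unfolding l_def using total[of x] fnc by (metis theI)
  have leq: "l x = a" if "(x,a)\<in>M" for x a using fnc[OF lM that] .
  have ladd: "l (x + x') = l x + l x'" for x x' using leq[OF add[OF lM lM]] .
  have lscl: "l (t *\<^sub>R x) = t * l x" for t x using leq[OF scl[OF lM]] .
  have lbd: "\<bar>l x\<bar> \<le> norm x" for x
  proof -
    have "l x \<le> norm x" using dom[OF lM] .
    moreover have "l ((-1) *\<^sub>R x) \<le> norm ((-1) *\<^sub>R x)" using dom[OF lM] .
    then have "- l x \<le> norm x" using lscl[of "-1" x] by simp
    ultimately show ?thesis by linarith
  qed
  have "bounded_linear l"
    by (rule bounded_linear_intro[of _ 1]) (auto simp: ladd lscl lbd)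
  then show ?thesis using lbd leq[OF yM] by blast
qed

lemma scaleC_one [simp]: "(1::complex) *\<^sub>C x = x"
  using scaleC_of_real[of 1 x] by simp

lemma scaleC_zero_left [simp]: "(0::complex) *\<^sub>C x = 0"
  using scaleC_of_real[of 0 x] by simp

lemma scaleC_zero_right [simp]: "c *\<^sub>C (0::'a::complex_banach) = 0"
  using scaleC_add_right[of c 0 0] by simp

lemma scaleC_diff_right: "c *\<^sub>C (x - y) = c *\<^sub>C x - c *\<^sub>C (y::'a::complex_banach)"
  using scaleC_add_right[of c "x - y" y] by (simp add: algebra_simps)

lemma scaleC_minus_right: "c *\<^sub>C (- x) = - (c *\<^sub>C (x::'a::complex_banach))"
  using scaleC_diff_right[of c 0 x] by simp

lemma scaleC_split: "a *\<^sub>C y = Re a *\<^sub>R y + Im a *\<^sub>R (\<i> *\<^sub>C (y::'a::complex_banach))"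
proof -
  have "a = complex_of_real (Re a) + complex_of_real (Im a) * \<i>" by (simp add: complex_eq_iff)
  then have "a *\<^sub>C y = complex_of_real (Re a) *\<^sub>C y + (complex_of_real (Im a) * \<i>) *\<^sub>C y"
    by (metis scaleC_add_left)
  also have "\<dots> = Re a *\<^sub>R y + Im a *\<^sub>R (\<i> *\<^sub>C y)"
    by (simp add: scaleC_of_real flip: scaleC_scaleC)
  finally show ?thesis .
qed

lemma bounded_linear_scaleC_left: "bounded_linear (\<lambda>h::complex. h *\<^sub>C (w::'a::complex_banach))"
proof (rule bounded_linear_intro[of _ "norm w"])
  fix x y :: complex show "(x + y) *\<^sub>C w = x *\<^sub>C w + y *\<^sub>C w" by (rule scaleC_add_left)
next
  fix r :: real and x :: complex
  show "(r *\<^sub>R x) *\<^sub>C w = r *\<^sub>R (x *\<^sub>C w)"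
    by (simp add: scaleR_conv_of_real scaleC_of_real flip: scaleC_scaleC)
next
  fix x :: complex show "norm (x *\<^sub>C w) \<le> norm x * norm w" by (simp add: norm_scaleC)
qed

lemma bounded_linear_scaleC_right: "bounded_linear (\<lambda>x::'a::complex_banach. c *\<^sub>C x)"
proof (rule bounded_linear_intro[of _ "cmod c"])
  fix x y :: 'a show "c *\<^sub>C (x + y) = c *\<^sub>C x + c *\<^sub>C y" by (rule scaleC_add_right)
next
  fix r :: real and x :: 'a
  show "c *\<^sub>C (r *\<^sub>R x) = r *\<^sub>R (c *\<^sub>C x)"
    by (simp add: scaleC_scaleC mult.commute flip: scaleC_of_real)
next
  fix x :: 'a show "norm (c *\<^sub>C x) \<le> norm x * cmod c" by (simp add: norm_scaleC)
qed

definition lc :: "('a::complex_banach \<Rightarrow> real) \<Rightarrow> 'a \<Rightarrow> complex" where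
  "lc l y = Complex (l y) (- l (\<i> *\<^sub>C y))"

lemma lc_bounded_linear:
  assumes "bounded_linear l" shows "bounded_linear (lc l)"
proof -
  interpret l: bounded_linear l by fact
  obtain K where K: "\<And>x. norm (l x) \<le> norm x * K" using l.bounded by blast
  interpret s: bounded_linear "\<lambda>x::'a. \<i> *\<^sub>C x" by (rule bounded_linear_scaleC_right)
  show ?thesis
  proof (rule bounded_linear_intro[of _ "2 * K"])
    fix x y show "lc l (x + y) = lc l x + lc l y" by (simp add: lc_def l.add s.add complex_eq_iff)
  next
    fix r x show "lc l (r *\<^sub>R x) = r *\<^sub>R lc l x" by (simp add: lc_def l.scale s.scale complex_eq_iff)
  next
    fix x
    have "cmod (lc l x) \<le> \<bar>l x\<bar> + \<bar>l (\<i> *\<^sub>C x)\<bar>"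
      using cmod_le[of "lc l x"] by (simp add: lc_def)
    also have "\<dots> \<le> norm x * K + norm (\<i> *\<^sub>C x) * K" using K by (intro add_mono) auto
    finally show "norm (lc l x) \<le> norm x * (2 * K)" by (simp add: norm_scaleC algebra_simps)
  qed
qed

lemma lc_scaleC:
  assumes "bounded_linear l" shows "lc l (a *\<^sub>C y) = a * lc l y"
proof -
  interpret l: bounded_linear l by fact
  have e1: "\<i> *\<^sub>C (a *\<^sub>C y) = (- Im a) *\<^sub>R y + Re a *\<^sub>R (\<i> *\<^sub>C y)"
    by (simp add: scaleC_scaleC scaleC_split[of "\<i> * a" y])
  have e2: "a *\<^sub>C y = Re a *\<^sub>R y + Im a *\<^sub>R (\<i> *\<^sub>C y)" by (rule scaleC_split)
  show ?thesis
    unfolding lc_def e1 unfolding e2 l.add l.scale by (simp add: complex_eq_iff algebra_simps)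
qed

lemma lc_norm:
  assumes "\<And>x. \<bar>l x\<bar> \<le> norm x" shows "cmod (lc l y) \<le> 2 * norm y"
proof -
  have "cmod (lc l y) \<le> \<bar>l y\<bar> + \<bar>l (\<i> *\<^sub>C y)\<bar>"
    using cmod_le[of "lc l y"] by (simp add: lc_def)
  also have "\<dots> \<le> norm y + norm (\<i> *\<^sub>C y)" using assms by (intro add_mono) auto
  finally show ?thesis by (simp add: norm_scaleC)
qed

lemma vec_bound:
  fixes y :: "'a::complex_banach"
  assumes "\<And>l. bounded_linear l \<Longrightarrow> (\<forall>x. \<bar>l x\<bar> \<le> norm x) \<Longrightarrow> cmod (lc l y) \<le> B"
  shows "norm y \<le> B"
proof -
  obtain l where l: "bounded_linear l" "\<forall>x. \<bar>l x\<bar> \<le> norm x" "l y = norm y"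
    using hahn_banach_norming by blast
  have "norm y = Re (lc l y)" using l(3) by (simp add: lc_def)
  also have "\<dots> \<le> cmod (lc l y)" by (rule complex_Re_le_cmod)
  also have "\<dots> \<le> B" using assms l by blast
  finally show ?thesis .
qed

lemma scal_deriv:
  fixes g :: "'x::complex_banach \<Rightarrow> 'f::complex_banach"
  assumes l: "bounded_linear l" and gD: "(g has_derivative D) (at (a + z0 *\<^sub>C w))"
    and cl: "complex_linear D"
  shows "((\<lambda>z. lc l (g (a + z *\<^sub>C w))) has_field_derivative lc l (D w)) (at z0)"
proof -
  have lin: "((\<lambda>z::complex. a + z *\<^sub>C w) has_derivative (\<lambda>h. h *\<^sub>C w)) (at z0)"
    using has_derivative_add[OF has_derivative_const[of a] bounded_linear.has_derivative[OF bounded_linear_scaleC_left[of w] has_derivative_ident]] by simp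
  have "((\<lambda>z. g (a + z *\<^sub>C w)) has_derivative (\<lambda>h. D (h *\<^sub>C w))) (at z0)"
    using diff_chain_at[OF lin gD] by (simp add: o_def)
  then have "((\<lambda>z. lc l (g (a + z *\<^sub>C w))) has_derivative (\<lambda>h. lc l (D (h *\<^sub>C w)))) (at z0)"
    using bounded_linear.has_derivative[OF lc_bounded_linear[OF l]] by blast
  moreover have "(\<lambda>h. lc l (D (h *\<^sub>C w))) = (*) (lc l (D w))"
    using cl by (auto simp: complex_linear_def lc_scaleC[OF l] mult.commute)
  ultimately show ?thesis by (simp add: has_field_derivative_def)
qed

lemma scal_holo:
  fixes g :: "'x::complex_banach \<Rightarrow> 'f::complex_banach"
  assumes l: "bounded_linear l" and g: "banach_holomorphic_on g U"
  shows "(\<lambda>z. lc l (g (a + z *\<^sub>C w))) holomorphic_on {z. a + z *\<^sub>C w \<in> U}"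
  unfolding holomorphic_on_def
proof
  fix z0 assume "z0 \<in> {z. a + z *\<^sub>C w \<in> U}"
  then obtain D where "(g has_derivative D) (at (a + z0 *\<^sub>C w))" "complex_linear D"
    using g unfolding banach_holomorphic_on_def by auto
  from scal_deriv[OF l this] show "(\<lambda>z. lc l (g (a + z *\<^sub>C w))) field_differentiable at z0 within {z. a + z *\<^sub>C w \<in> U}"
    using field_differentiable_at_within field_differentiable_def by blast
qed

lemma sums_norm_le:
  fixes f :: "nat \<Rightarrow> 'a::banach"
  assumes "f sums s" "g sums t" "\<And>n. norm (f n) \<le> g n" shows "norm s \<le> t"
proof -
  have sg: "summable g" using assms(2) sums_summable by blast
  have sn: "summable (\<lambda>n. norm (f n))" using summable_norm_comparison_test[of f g] assms(3) sg by blast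
  have "norm s = norm (suminf f)" using sums_unique[OF assms(1)] by simp
  also have "\<dots> \<le> (\<Sum>n. norm (f n))" by (rule summable_norm[OF sn])
  also have "\<dots> \<le> suminf g" by (rule suminf_le[OF assms(3) sn sg])
  also have "\<dots> = t" using sums_unique[OF assms(2)] by simp
  finally show ?thesis .
qed

lemma coef_bound:
  fixes \<psi> :: "complex \<Rightarrow> complex"
  assumes holo: "\<psi> holomorphic_on ball 0 R" and r: "0 < r" "r < R"
    and bd: "\<And>z. z \<in> ball 0 R \<Longrightarrow> cmod (\<psi> z) \<le> A"
  shows "cmod ((deriv ^^ n) \<psi> 0 / fact n) \<le> A / r^n"
proof -
  have "cmod ((deriv ^^ n) \<psi> 0) \<le> fact n * A / r^n"
  proof (rule Cauchy_inequality)
    show "\<psi> holomorphic_on ball 0 r" by (rule holomorphic_on_subset[OF holo]) (use r in auto)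
    show "continuous_on (cball 0 r) \<psi>"
      by (rule continuous_on_subset[OF holomorphic_on_imp_continuous_on[OF holo]]) (use r in auto)
    show "0 < r" by fact
  next
    fix x :: complex assume "norm (0 - x) = r" then show "norm (\<psi> x) \<le> A" using bd r by auto
  qed
  then have "cmod ((deriv ^^ n) \<psi> 0) / fact n \<le> A / r^n"
    by (simp add: pos_divide_le_eq mult.commute)
  then show ?thesis by (simp add: norm_divide)
qed

lemma scalar_L1:
  fixes \<psi> :: "complex \<Rightarrow> complex"
  assumes holo: "\<psi> holomorphic_on ball 0 1" and bd: "\<And>z. z \<in> ball 0 1 \<Longrightarrow> cmod (\<psi> z) \<le> A"
  shows "cmod (deriv \<psi> 0) \<le> 2 * A"
  using coef_bound[OF holo _ _ bd, of "1/2" 1] by simp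

lemma scalar_L2:
  fixes \<psi> :: "complex \<Rightarrow> complex"
  assumes holo: "\<psi> holomorphic_on ball 0 1" and bd: "\<And>z. z \<in> ball 0 1 \<Longrightarrow> cmod (\<psi> z) \<le> A"
    and lam: "cmod u \<le> 1/4"
  shows "cmod (\<psi> u - \<psi> 0 - u * deriv \<psi> 0) \<le> 8 * A * (cmod u)^2"
proof -
  define c where "c n = (deriv ^^ n) \<psi> 0 / fact n" for n
  have A0: "0 \<le> A" using bd[of 0] by (smt (verit) centre_in_ball norm_ge_zero zero_less_one)
  have S: "(\<lambda>n. c n * u^n) sums \<psi> u"
    using holomorphic_power_series[OF holo, of u] lam by (simp add: c_def)
  have "(\<lambda>i. c (i+2) * u^(i+2)) sums (\<psi> u - (\<Sum>i<2. c i * u^i))"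
    using sums_iff_shift[of "\<lambda>n. c n * u^n" 2 "\<psi> u - (\<Sum>i<2. c i * u^i)"] S by simp
  moreover have "(\<Sum>i<2. c i * u^i) = \<psi> 0 + u * deriv \<psi> 0"
    by (simp add: c_def numeral_2_eq_2)
  ultimately have T: "(\<lambda>i. c (i+2) * u^(i+2)) sums (\<psi> u - \<psi> 0 - u * deriv \<psi> 0)"
    by (simp add: algebra_simps)
  define q where "q = 2 * cmod u"
  have q: "0 \<le> q" "q \<le> 1/2" using lam by (auto simp: q_def)
  have G: "(\<lambda>i. (4 * A * (cmod u)^2) * q^i) sums ((4 * A * (cmod u)^2) * (1 / (1 - q)))"
    by (rule sums_mult[OF geometric_sums]) (use q in auto)
  have "cmod (\<psi> u - \<psi> 0 - u * deriv \<psi> 0) \<le> (4 * A * (cmod u)^2) * (1 / (1 - q))"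
  proof (rule sums_norm_le[OF T G])
    fix i
    have "cmod (c (i+2)) \<le> A / (1/2)^(i+2)" unfolding c_def by (rule coef_bound[OF holo _ _ bd]) auto
    then have "cmod (c (i+2)) \<le> A * 2^(i+2)" by (simp add: power_one_over)
    then have "cmod (c (i+2) * u^(i+2)) \<le> A * 2^(i+2) * cmod u ^(i+2)"
      by (simp add: norm_mult norm_power mult_right_mono)
    also have "\<dots> = (4 * A * (cmod u)^2) * q^i" by (simp add: q_def power_add power_mult_distrib power2_eq_square)
    finally show "norm (c (i+2) * u^(i+2)) \<le> (4 * A * (cmod u)^2) * q^i" .
  qed
  also have "\<dots> \<le> (4 * A * (cmod u)^2) * 2"
    using q A0 by (intro mult_left_mono) (auto simp: field_simps)
  finally show ?thesis by simp
qed

lemma sum_pow4_le: "(\<Sum>i<K. (4::real)^i) \<le> 4^K"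
proof (induction K)
  case (Suc K)
  have "(\<Sum>i<Suc K. (4::real)^i) = (\<Sum>i<K. 4^i) + 4^K" by simp
  also have "\<dots> \<le> 4^K + 4^K" using Suc.IH by simp
  also have "\<dots> \<le> 4^Suc K" by simp
  finally show ?case .
qed simp

lemma scalar_TC:
  fixes \<psi> :: "complex \<Rightarrow> complex"
  assumes holo: "\<psi> holomorphic_on ball 0 (5/3)"
    and bdA: "\<And>z. z \<in> ball 0 (5/3) \<Longrightarrow> cmod (\<psi> z) \<le> A"
    and bdE: "\<And>z. z \<in> ball 0 (1/3) \<Longrightarrow> cmod (\<psi> z) \<le> E"
  shows "cmod (\<psi> 1) \<le> E * 4^K + 3 * A * (2/3)^K"
proof -
  define c where "c n = (deriv ^^ n) \<psi> 0 / fact n" for n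
  have E0: "0 \<le> E" using bdE[of 0] by (smt (verit) centre_in_ball norm_ge_zero divide_pos_pos zero_less_one)
  have cA: "cmod (c n) \<le> A * (2/3)^n" for n
    using coef_bound[OF holo _ _ bdA, of "3/2" n] by (simp add: c_def power_one_over field_simps)
  have holo': "\<psi> holomorphic_on ball 0 (1/3)" by (rule holomorphic_on_subset[OF holo]) auto
  have cE: "cmod (c n) \<le> E * 4^n" for n
    using coef_bound[OF holo' _ _ bdE, of "1/4" n] by (simp add: c_def power_one_over)
  have S: "c sums \<psi> 1"
    using holomorphic_power_series[OF holo, of 1] by (simp add: c_def[abs_def])
  have T: "(\<lambda>i. c (i+K)) sums (\<psi> 1 - (\<Sum>i<K. c i))"
    using sums_iff_shift[of c K "\<psi> 1 - (\<Sum>i<K. c i)"] S by simp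
  have G: "(\<lambda>i. (A * (2/3)^K) * (2/3)^i) sums ((A * (2/3)^K) * (1 / (1 - 2/3)))"
    by (rule sums_mult[OF geometric_sums]) auto
  have tail: "cmod (\<psi> 1 - (\<Sum>i<K. c i)) \<le> (A * (2/3)^K) * (1 / (1 - 2/3))"
  proof (rule sums_norm_le[OF T G])
    fix i show "norm (c (i+K)) \<le> (A * (2/3)^K) * (2/3)^i"
      using cA[of "i+K"] by (simp add: power_add mult_ac)
  qed
  have head: "cmod (\<Sum>i<K. c i) \<le> E * 4^K"
  proof -
    have "cmod (\<Sum>i<K. c i) \<le> (\<Sum>i<K. cmod (c i))" by (rule norm_sum)
    also have "\<dots> \<le> (\<Sum>i<K. E * 4^i)" by (rule sum_mono) (rule cE)
    also have "\<dots> = E * (\<Sum>i<K. 4^i)" by (simp add: sum_distrib_left)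
    also have "\<dots> \<le> E * 4^K" by (rule mult_left_mono[OF sum_pow4_le E0])
    finally show ?thesis .
  qed
  have "cmod (\<psi> 1) \<le> cmod (\<Sum>i<K. c i) + cmod (\<psi> 1 - (\<Sum>i<K. c i))"
    by (metis add.commute diff_add_cancel norm_triangle_ineq)
  also have "\<dots> \<le> E * 4^K + 3 * A * (2/3)^K" using head tail by simp
  finally show ?thesis .
qed

lemma line_holo:
  fixes g :: "'x::complex_banach \<Rightarrow> 'f::complex_banach"
  assumes g: "banach_holomorphic_on g S" and l: "bounded_linear l"
    and sub: "\<And>u. u \<in> ball 0 \<rho> \<Longrightarrow> z + u *\<^sub>C w \<in> S"
  shows "(\<lambda>u. lc l (g (z + u *\<^sub>C w))) holomorphic_on ball 0 \<rho>"
  by (rule holomorphic_on_subset[OF scal_holo[OF l g]]) (use sub in auto)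

lemma vec_L:
  fixes g :: "'x::complex_banach \<Rightarrow> 'f::complex_banach"
  assumes g: "banach_holomorphic_on g (ball z R)" and R: "0 < R"
    and bd: "\<And>x. x \<in> ball z R \<Longrightarrow> norm (g x) \<le> A"
    and gD: "(g has_derivative D) (at z)" and cl: "complex_linear D"
  shows "norm (D h) \<le> 4 * A * norm h / R \<and>
         (norm h \<le> R/4 \<longrightarrow> norm (g (z + h) - g z - D h) \<le> 16 * A * (norm h)^2 / R^2)"
proof (cases "h = 0")
  case True
  have "linear D" using has_derivative_bounded_linear[OF gD] bounded_linear.linear by blast
  then show ?thesis using True by (simp add: linear_0)
next
  case False
  interpret D: bounded_linear D using has_derivative_bounded_linear[OF gD] .
  define w where "w = (R / norm h) *\<^sub>R h"
  have nw: "norm w = R" using False R by (simp add: w_def)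
  define u0 where "u0 = complex_of_real (norm h / R)"
  have "u0 *\<^sub>C w = (norm h / R) *\<^sub>R w" unfolding u0_def by (rule scaleC_of_real)
  also have "\<dots> = h" using False R by (simp add: w_def)
  finally have u0w: "u0 *\<^sub>C w = h" .
  have cu0: "cmod u0 = norm h / R" unfolding u0_def norm_of_real using R by simp
  have A0: "0 \<le> A" using bd[of z] R by (smt (verit) centre_in_ball norm_ge_zero)
  have key: "cmod (deriv (\<lambda>u. lc l (g (z + u *\<^sub>C w))) 0) \<le> 2 * (2 * A) \<and>
      (norm h \<le> R/4 \<longrightarrow> cmod (lc l (g (z + h) - g z - D h)) \<le> 8 * (2 * A) * (norm h / R)^2) \<and>
      deriv (\<lambda>u. lc l (g (z + u *\<^sub>C w))) 0 = lc l (D w)"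
    if l: "bounded_linear l" and lb: "\<forall>x. \<bar>l x\<bar> \<le> norm x" for l
  proof -
    interpret L: bounded_linear "lc l" using lc_bounded_linear[OF l] .
    define \<psi> where "\<psi> u = lc l (g (z + u *\<^sub>C w))" for u
    have sub: "z + u *\<^sub>C w \<in> ball z R" if "u \<in> ball 0 1" for u
      using that nw R by (simp add: dist_norm norm_scaleC)
    have holo: "\<psi> holomorphic_on ball 0 1"
      unfolding \<psi>_def by (rule line_holo[OF g l sub])
    have bd2: "cmod (\<psi> u) \<le> 2 * A" if "u \<in> ball 0 1" for u
    proof -
      have "cmod (\<psi> u) \<le> 2 * norm (g (z + u *\<^sub>C w))" unfolding \<psi>_def by (rule lc_norm) (use lb in auto)
      also have "\<dots> \<le> 2 * A" using bd[OF sub[OF that]] by simp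
      finally show ?thesis .
    qed
    have dv: "deriv \<psi> 0 = lc l (D w)"
      unfolding \<psi>_def using scal_deriv[OF l _ cl, of g z 0 w] gD by (simp add: DERIV_imp_deriv)
    have rem: "\<psi> u0 - \<psi> 0 - u0 * deriv \<psi> 0 = lc l (g (z + h) - g z - D h)"
    proof -
      have "u0 * deriv \<psi> 0 = lc l (u0 *\<^sub>C D w)" using dv lc_scaleC[OF l] by simp
      also have "u0 *\<^sub>C D w = D h" using cl u0w unfolding complex_linear_def by metis
      finally show ?thesis by (simp add: \<psi>_def[abs_def] u0w L.diff)
    qed
    have "norm h \<le> R/4 \<longrightarrow> cmod (lc l (g (z + h) - g z - D h)) \<le> 8 * (2 * A) * (norm h / R)^2"
      using scalar_L2[OF holo bd2, of u0] rem cu0 R by (simp add: divide_le_eq)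
    then show ?thesis using scalar_L1[OF holo bd2] dv by (simp add: \<psi>_def[abs_def])
  qed
  have Dw: "norm (D w) \<le> 4 * A"
  proof (rule vec_bound)
    fix l :: "'f \<Rightarrow> real" assume "bounded_linear l" "\<forall>x. \<bar>l x\<bar> \<le> norm x"
    note kk = key[OF this]
    have k1: "cmod (deriv (\<lambda>u. lc l (g (z + u *\<^sub>C w))) 0) \<le> 2 * (2 * A)"
      using kk by (elim conjE)
    have k3: "deriv (\<lambda>u. lc l (g (z + u *\<^sub>C w))) 0 = lc l (D w)" using kk by (elim conjE)
    show "cmod (lc l (D w)) \<le> 4 * A" using k1 unfolding k3 by simp
  qed
  have "D h = D (u0 *\<^sub>C w)" using u0w by simp
  also have "\<dots> = u0 *\<^sub>C D w" using cl unfolding complex_linear_def by blast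
  also have "\<dots> = (norm h / R) *\<^sub>R D w" unfolding u0_def by (rule scaleC_of_real)
  finally have "D h = (norm h / R) *\<^sub>R D w" .
  then have "norm (D h) = norm h / R * norm (D w)" using R by simp
  also have "\<dots> \<le> norm h / R * (4 * A)" using Dw R by (intro mult_left_mono) auto
  finally have 1: "norm (D h) \<le> 4 * A * norm h / R" by (simp add: mult_ac)
  have 2: "norm (g (z + h) - g z - D h) \<le> 16 * A * (norm h)^2 / R^2" if "norm h \<le> R/4"
  proof (rule vec_bound)
    fix l :: "'f \<Rightarrow> real" assume "bounded_linear l" "\<forall>x. \<bar>l x\<bar> \<le> norm x"
    then have "cmod (lc l (g (z + h) - g z - D h)) \<le> 8 * (2 * A) * (norm h / R)^2" using key that by blast
    then show "cmod (lc l (g (z + h) - g z - D h)) \<le> 16 * A * (norm h)^2 / R^2"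
      by (simp add: power_divide)
  qed
  show ?thesis using 1 2 by blast
qed

lemma vec_TC:
  fixes h :: "'x::complex_banach \<Rightarrow> 'f::complex_banach"
  assumes hh: "banach_holomorphic_on h (ball b R)" and R: "0 < R"
    and bdA: "\<And>x. x \<in> ball b R \<Longrightarrow> norm (h x) \<le> A"
    and bdE: "\<And>x. x \<in> ball b (R/5) \<Longrightarrow> norm (h x) \<le> E"
    and w: "norm w < 3*R/5"
  shows "norm (h (b + w)) \<le> 2*E*4^K + 6*A*(2/3)^K"
proof (rule vec_bound)
  fix l :: "'f \<Rightarrow> real" assume l: "bounded_linear l" and lb: "\<forall>x. \<bar>l x\<bar> \<le> norm x"
  define \<psi> where "\<psi> u = lc l (h (b + u *\<^sub>C w))" for u
  have sub: "b + u *\<^sub>C w \<in> ball b R" if "u \<in> ball 0 (5/3)" for u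
  proof -
    have "cmod u \<le> 5/3" using that by simp
    then have "norm (u *\<^sub>C w) \<le> (5/3) * norm w" unfolding norm_scaleC by (rule mult_right_mono) simp
    also have "\<dots> < R" using w by simp
    finally show ?thesis by (simp add: dist_norm)
  qed
  have sub2: "b + u *\<^sub>C w \<in> ball b (R/5)" if "u \<in> ball 0 (1/3)" for u
  proof -
    have "cmod u \<le> 1/3" using that by simp
    then have "norm (u *\<^sub>C w) \<le> (1/3) * norm w" unfolding norm_scaleC by (rule mult_right_mono) simp
    also have "\<dots> < R/5" using w by simp
    finally show ?thesis by (simp add: dist_norm)
  qed
  have holo: "\<psi> holomorphic_on ball 0 (5/3)"
    unfolding \<psi>_def by (rule line_holo[OF hh l sub])
  have bA: "cmod (\<psi> u) \<le> 2 * A" if "u \<in> ball 0 (5/3)" for u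
  proof -
    have "cmod (\<psi> u) \<le> 2 * norm (h (b + u *\<^sub>C w))" unfolding \<psi>_def by (rule lc_norm) (use lb in auto)
    also have "\<dots> \<le> 2 * A" using bdA[OF sub[OF that]] by simp
    finally show ?thesis .
  qed
  have bE: "cmod (\<psi> u) \<le> 2 * E" if "u \<in> ball 0 (1/3)" for u
  proof -
    have "cmod (\<psi> u) \<le> 2 * norm (h (b + u *\<^sub>C w))" unfolding \<psi>_def by (rule lc_norm) (use lb in auto)
    also have "\<dots> \<le> 2 * E" using bdE[OF sub2[OF that]] by simp
    finally show ?thesis .
  qed
  have "cmod (\<psi> 1) \<le> (2*E) * 4^K + 3 * (2*A) * (2/3)^K" by (rule scalar_TC[OF holo bA bE])
  then show "cmod (lc l (h (b + w))) \<le> 2*E*4^K + 6*A*(2/3)^K" by (simp add: \<psi>_def)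
qed

lemma scaleC_scaleR_comm: "c *\<^sub>C (t *\<^sub>R (y::'a::complex_banach)) = t *\<^sub>R (c *\<^sub>C y)"
  by (simp add: scaleC_scaleC mult.commute flip: scaleC_of_real)

lemma bh_subset: "banach_holomorphic_on g S \<Longrightarrow> T \<subseteq> S \<Longrightarrow> banach_holomorphic_on g T"
  by (auto simp: banach_holomorphic_on_def)

lemma bh_union: "banach_holomorphic_on g S \<Longrightarrow> banach_holomorphic_on g T \<Longrightarrow> banach_holomorphic_on g (S \<union> T)"
  by (auto simp: banach_holomorphic_on_def)

lemma bh_diff:
  assumes "banach_holomorphic_on f S" "banach_holomorphic_on g S"
  shows "banach_holomorphic_on (\<lambda>x. f x - g x) S"
  unfolding banach_holomorphic_on_def
proof
  fix z assume "z \<in> S"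
  then obtain Df Dg where "(f has_derivative Df) (at z)" "complex_linear Df"
    "(g has_derivative Dg) (at z)" "complex_linear Dg"
    using assms unfolding banach_holomorphic_on_def by blast
  then show "\<exists>D. ((\<lambda>x. f x - g x) has_derivative D) (at z) \<and> complex_linear D"
    by (intro exI[of _ "\<lambda>h. Df h - Dg h"] conjI has_derivative_diff)
       (auto simp: complex_linear_def scaleC_diff_right)
qed

lemma bh_add:
  assumes "banach_holomorphic_on f S" "banach_holomorphic_on g S"
  shows "banach_holomorphic_on (\<lambda>x. f x + g x) S"
  unfolding banach_holomorphic_on_def
proof
  fix z assume "z \<in> S"
  then obtain Df Dg where "(f has_derivative Df) (at z)" "complex_linear Df"
    "(g has_derivative Dg) (at z)" "complex_linear Dg"
    using assms unfolding banach_holomorphic_on_def by blast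
  then show "\<exists>D. ((\<lambda>x. f x + g x) has_derivative D) (at z) \<and> complex_linear D"
    by (intro exI[of _ "\<lambda>h. Df h + Dg h"] conjI has_derivative_add)
       (auto simp: complex_linear_def scaleC_add_right)
qed

lemma bh_scaleR:
  assumes "banach_holomorphic_on f S"
  shows "banach_holomorphic_on (\<lambda>x. t *\<^sub>R f x) S"
  unfolding banach_holomorphic_on_def
proof
  fix z assume "z \<in> S"
  then obtain Df where "(f has_derivative Df) (at z)" "complex_linear Df"
    using assms unfolding banach_holomorphic_on_def by blast
  then show "\<exists>D. ((\<lambda>x. t *\<^sub>R f x) has_derivative D) (at z) \<and> complex_linear D"
    by (intro exI[of _ "\<lambda>h. t *\<^sub>R Df h"] conjI bounded_linear.has_derivative[OF bounded_linear_scaleR_right])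
       (auto simp: complex_linear_def scaleC_scaleR_comm)
qed

lemma bh_scaleC:
  assumes "banach_holomorphic_on f S"
  shows "banach_holomorphic_on (\<lambda>x. a *\<^sub>C f x) S"
  unfolding banach_holomorphic_on_def
proof
  fix z assume "z \<in> S"
  then obtain Df where "(f has_derivative Df) (at z)" "complex_linear Df"
    using assms unfolding banach_holomorphic_on_def by blast
  then show "\<exists>D. ((\<lambda>x. a *\<^sub>C f x) has_derivative D) (at z) \<and> complex_linear D"
    by (intro exI[of _ "\<lambda>h. a *\<^sub>C Df h"] conjI bounded_linear.has_derivative[OF bounded_linear_scaleC_right])
       (auto simp: complex_linear_def scaleC_scaleC mult.commute)
qed

lemma bh_zero: "banach_holomorphic_on (\<lambda>x. 0) S"
  unfolding banach_holomorphic_on_def complex_linear_def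
  by (auto intro!: exI[of _ "\<lambda>h. 0"])

lemma bh_cong:
  assumes "open S" "banach_holomorphic_on g S" "\<And>x. x \<in> S \<Longrightarrow> f x = g x"
  shows "banach_holomorphic_on f S"
  unfolding banach_holomorphic_on_def
proof
  fix z assume z: "z \<in> S"
  then obtain D where "(g has_derivative D) (at z)" "complex_linear D"
    using assms unfolding banach_holomorphic_on_def by blast
  moreover have "(f has_derivative D) (at z)"
    by (rule has_derivative_transform_within_open[OF \<open>(g has_derivative D) (at z)\<close> assms(1) z])
       (use assms(3) in auto)
  ultimately show "\<exists>D. (f has_derivative D) (at z) \<and> complex_linear D" by blast
qed

lemma bh_apply:
  fixes P :: "'x::complex_banach \<Rightarrow> ('e::complex_banach \<Rightarrow>\<^sub>L 'f::complex_banach)"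
  assumes "banach_holomorphic_on P S"
  shows "banach_holomorphic_on (\<lambda>z. blinfun_apply (P z) e) S"
  unfolding banach_holomorphic_on_def
proof
  fix z assume "z \<in> S"
  then obtain D where D: "(P has_derivative D) (at z)" "complex_linear D"
    using assms unfolding banach_holomorphic_on_def by blast
  have "((\<lambda>z. blinfun_apply (P z) e) has_derivative (\<lambda>h. blinfun_apply (D h) e)) (at z)"
    by (rule bounded_linear.has_derivative[OF blinfun.bounded_linear_left D(1)])
  moreover have "complex_linear (\<lambda>h. blinfun_apply (D h) e)"
    using D(2) by (simp add: complex_linear_def blinfun_apply_scaleC)
  ultimately show "\<exists>D. ((\<lambda>z. blinfun_apply (P z) e) has_derivative D) (at z) \<and> complex_linear D" by blast
qed

lemma bh_cont: "banach_holomorphic_on g S \<Longrightarrow> z \<in> S \<Longrightarrow> isCont g z"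
  unfolding banach_holomorphic_on_def using has_derivative_continuous by blast

lemma quad_deriv:
  assumes D: "bounded_linear D" and R: "0 < R" and C: "0 \<le> C"
    and rem: "\<And>h. norm h < R \<Longrightarrow> norm (F (z + h) - F z - D h) \<le> C * (norm h)^2"
  shows "(F has_derivative D) (at z)"
  unfolding has_derivative_at_alt
proof (intro conjI allI impI D)
  fix e :: real assume e: "0 < e"
  define d where "d = min R (e / (C + 1))"
  have d: "0 < d" using R e C by (simp add: d_def)
  show "\<exists>d>0. \<forall>y. norm (y - z) < d \<longrightarrow> norm (F y - F z - D (y - z)) \<le> e * norm (y - z)"
  proof (intro exI conjI allI impI d)
    fix y assume y: "norm (y - z) < d"
    define h where "h = y - z"
    have "norm (F y - F z - D (y - z)) = norm (F (z + h) - F z - D h)" by (simp add: h_def)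
    also have "\<dots> \<le> C * (norm h)^2" by (rule rem) (use y in \<open>simp add: h_def d_def\<close>)
    also have "\<dots> = (C * norm h) * norm h" by (simp add: power2_eq_square)
    also have "\<dots> \<le> e * norm h"
    proof (rule mult_right_mono)
      have "C * norm h \<le> C * (e / (C + 1))" using y C by (intro mult_left_mono) (auto simp: h_def d_def)
      also have "\<dots> \<le> e" using C e by (simp add: field_simps)
      finally show "C * norm h \<le> e" .
    qed simp
    finally show "norm (F y - F z - D (y - z)) \<le> e * norm (y - z)" by (simp add: h_def)
  qed (rule d)
qed

lemma approx_Cauchy:
  fixes X :: "nat \<Rightarrow> 'a::real_normed_vector"
  assumes "\<And>\<eta>. \<eta> > 0 \<Longrightarrow> \<exists>Y. Cauchy Y \<and> (\<forall>j. norm (X j - Y j) \<le> \<eta>)"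
  shows "Cauchy X"
proof (rule CauchyI)
  fix e :: real assume e: "0 < e"
  obtain Y where Y: "Cauchy Y" "\<And>j. norm (X j - Y j) \<le> e/3" using assms[of "e/3"] e by auto
  obtain M where M: "\<forall>m\<ge>M. \<forall>n\<ge>M. norm (Y m - Y n) < e/3" using CauchyD[OF Y(1), of "e/3"] e by auto
  show "\<exists>M. \<forall>m\<ge>M. \<forall>n\<ge>M. norm (X m - X n) < e"
  proof (intro exI allI impI)
    fix m n assume "M \<le> m" "M \<le> n"
    have "norm (X m - X n) = norm ((X m - Y m) + (Y m - Y n) - (X n - Y n))" by (simp add: algebra_simps)
    also have "\<dots> \<le> norm ((X m - Y m) + (Y m - Y n)) + norm (X n - Y n)" by (rule norm_triangle_ineq4)
    also have "\<dots> \<le> norm (X m - Y m) + norm (Y m - Y n) + norm (X n - Y n)"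
      using norm_triangle_ineq by (rule add_right_mono)
    also have "\<dots> < e/3 + e/3 + e/3"
    proof -
      have "norm (Y m - Y n) < e/3" using M \<open>M \<le> m\<close> \<open>M \<le> n\<close> by blast
      then show ?thesis using Y(2)[of m] Y(2)[of n] by linarith
    qed
    finally show "norm (X m - X n) < e" by simp
  qed
qed

lemma holo_limit:
  fixes f :: "nat \<Rightarrow> 'x::complex_banach \<Rightarrow> 'f::complex_banach"
  assumes U: "open U" and hf: "\<And>j. banach_holomorphic_on (f j) U"
    and bd: "\<And>j x. x \<in> U \<Longrightarrow> norm (f j x) \<le> M"
    and lim: "\<And>x. x \<in> U \<Longrightarrow> (\<lambda>j. f j x) \<longlonglongrightarrow> F x"
  shows "banach_holomorphic_on F U"
  unfolding banach_holomorphic_on_def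
proof
  fix z assume z: "z \<in> U"
  obtain R where R: "R > 0" "ball z R \<subseteq> U" using U z open_contains_ball by blast
  have M0: "0 \<le> M" using bd[OF z, of 0] norm_ge_zero order_trans by blast
  have "\<forall>j. \<exists>D. (f j has_derivative D) (at z) \<and> complex_linear D"
    using hf z unfolding banach_holomorphic_on_def by blast
  then obtain Dj where Dj: "\<And>j. (f j has_derivative Dj j) (at z)" "\<And>j. complex_linear (Dj j)"
    by metis
  have lin: "\<And>j. bounded_linear (Dj j)" using Dj(1) has_derivative_bounded_linear by blast
  have est: "norm (Dj j h) \<le> 4 * M * norm h / R \<and>
      (norm h \<le> R/4 \<longrightarrow> norm (f j (z + h) - f j z - Dj j h) \<le> 16 * M * (norm h)^2 / R^2)" for j h
    by (rule vec_L[OF bh_subset[OF hf R(2)] R(1) _ Dj(1) Dj(2)]) (use bd R(2) in auto)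
  have zU: "z + h \<in> U" if "norm h < R" for h using that R(2) by (auto simp: dist_norm)
  have cau: "Cauchy (\<lambda>j. Dj j h)" for h
  proof (cases "h = 0")
    case True
    have "Cauchy (\<lambda>j::nat. 0::'f)" by (rule LIMSEQ_imp_Cauchy[OF tendsto_const])
    then show ?thesis using lin True by (simp add: linear_simps)
  next
    case False
    show ?thesis
    proof (rule approx_Cauchy)
      fix \<eta> :: real assume eta: "\<eta> > 0"
      define t where "t = min (R / (4 * norm h)) (\<eta> * R^2 / (16 * (M + 1) * (norm h)^2))"
      have t: "t > 0" using False R eta M0 by (simp add: t_def)
      have t1: "t \<le> R / (4 * norm h)" unfolding t_def by (rule min.cobounded1)
      have t2: "t \<le> \<eta> * R^2 / (16 * (M + 1) * (norm h)^2)" unfolding t_def by (rule min.cobounded2)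
      have th: "norm (t *\<^sub>R h) \<le> R/4"
      proof -
        have "norm (t *\<^sub>R h) = t * norm h" using t by simp
        also have "\<dots> \<le> R / (4 * norm h) * norm h" using t1 by (rule mult_right_mono) simp
        also have "\<dots> = R/4" using False by simp
        finally show ?thesis .
      qed
      have tR: "norm (t *\<^sub>R h) < R" using th R by simp
      define Y where "Y j = (1/t) *\<^sub>R (f j (z + t *\<^sub>R h) - f j z)" for j
      have "Y \<longlonglongrightarrow> (1/t) *\<^sub>R (F (z + t *\<^sub>R h) - F z)"
        unfolding Y_def by (intro tendsto_intros lim zU[OF tR] z)
      then have cY: "Cauchy Y" by (rule LIMSEQ_imp_Cauchy)
      have "norm (Dj j h - Y j) \<le> \<eta>" for j
      proof -
        interpret D: bounded_linear "Dj j" by (rule lin)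
        have "Dj j h - Y j = (1/t) *\<^sub>R (Dj j (t *\<^sub>R h) - (f j (z + t *\<^sub>R h) - f j z))"
          using t by (simp add: Y_def D.scale algebra_simps)
        then have "norm (Dj j h - Y j) = (1/t) * norm (f j (z + t *\<^sub>R h) - f j z - Dj j (t *\<^sub>R h))"
          using t by (simp add: norm_minus_commute)
        also have "\<dots> \<le> (1/t) * (16 * M * (norm (t *\<^sub>R h))^2 / R^2)"
          using est[of j "t *\<^sub>R h"] th t by (intro mult_left_mono) auto
        also have "\<dots> = 16 * M * t * (norm h)^2 / R^2" using t by (simp add: power2_eq_square)
        also have "\<dots> \<le> 16 * (M + 1) * t * (norm h)^2 / R^2"
          using t R by (intro divide_right_mono mult_right_mono) auto
        also have "\<dots> \<le> 16 * (M + 1) * (\<eta> * R^2 / (16 * (M + 1) * (norm h)^2)) * (norm h)^2 / R^2"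
          using t R M0 t2 by (intro divide_right_mono mult_right_mono mult_left_mono) auto
        also have "\<dots> = (16 * (M + 1) * (norm h)^2) * (\<eta> * R^2 / (16 * (M + 1) * (norm h)^2)) / R^2"
          by (simp add: mult_ac)
        also have "\<dots> = \<eta>"
        proof -
          have X: "16 * (M + 1) * (norm h)^2 \<noteq> 0" using M0 False by simp
          show ?thesis using X R by simp
        qed
        finally show ?thesis .
      qed
      then show "\<exists>Y. Cauchy Y \<and> (\<forall>j. norm (Dj j h - Y j) \<le> \<eta>)" using cY by blast
    qed
  qed
  define D where "D h = lim (\<lambda>j. Dj j h)" for h
  have DL: "(\<lambda>j. Dj j h) \<longlonglongrightarrow> D h" for h
    unfolding D_def using cau[of h] Cauchy_convergent_iff convergent_LIMSEQ_iff by blast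
  have Dadd: "D (x + y) = D x + D y" for x y
  proof -
    have "(\<lambda>j. Dj j (x + y)) \<longlonglongrightarrow> D x + D y"
      using tendsto_add[OF DL[of x] DL[of y]] lin by (simp add: linear_simps)
    then show ?thesis using DL LIMSEQ_unique by blast
  qed
  have Dscl: "D (r *\<^sub>R x) = r *\<^sub>R D x" for r x
  proof -
    have "(\<lambda>j. Dj j (r *\<^sub>R x)) \<longlonglongrightarrow> r *\<^sub>R D x"
      using tendsto_scaleR[OF tendsto_const DL[of x]] lin by (simp add: linear_simps)
    then show ?thesis using DL LIMSEQ_unique by blast
  qed
  have Dbd: "norm (D h) \<le> norm h * (4 * M / R)" for h
  proof (rule LIMSEQ_le_const2[OF tendsto_norm[OF DL[of h]]])
    show "\<exists>N. \<forall>n\<ge>N. norm (Dj n h) \<le> norm h * (4 * M / R)" using est by (auto simp: field_simps)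
  qed
  have Dlin: "bounded_linear D" by (rule bounded_linear_intro[OF Dadd Dscl Dbd])
  have Dcl: "complex_linear D" unfolding complex_linear_def
  proof (intro allI)
    fix c h
    have "(\<lambda>j. Dj j (c *\<^sub>C h)) \<longlonglongrightarrow> c *\<^sub>C D h"
      using bounded_linear.tendsto[OF bounded_linear_scaleC_right DL[of h]] Dj(2)
      by (simp add: complex_linear_def)
    then show "D (c *\<^sub>C h) = c *\<^sub>C D h" using DL LIMSEQ_unique by blast
  qed
  have "(F has_derivative D) (at z)"
  proof (rule quad_deriv[OF Dlin _ _ ])
    show "0 < R/4" using R by simp
    show "0 \<le> 16 * M / R^2" using M0 by simp
    fix h :: 'x assume h: "norm h < R/4"
    have "(\<lambda>j. f j (z + h) - f j z - Dj j h) \<longlonglongrightarrow> F (z + h) - F z - D h"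
      using h R by (intro tendsto_intros lim zU z DL) auto
    then show "norm (F (z + h) - F z - D h) \<le> 16 * M / R^2 * (norm h)^2"
      by (rule LIMSEQ_le_const2[OF tendsto_norm]) (use est h in auto)
  qed
  then show "\<exists>D. (F has_derivative D) (at z) \<and> complex_linear D" using Dcl by blast
qed

lemma scalar_zero:
  fixes \<psi> :: "complex \<Rightarrow> complex"
  assumes holo: "\<psi> holomorphic_on ball 0 (5/3)" and z: "\<And>z. z \<in> ball 0 (1/3) \<Longrightarrow> \<psi> z = 0"
  shows "\<psi> 1 = 0"
proof -
  have holo': "\<psi> holomorphic_on ball 0 (1/3)" by (rule holomorphic_on_subset[OF holo]) auto
  have c0: "(deriv ^^ n) \<psi> 0 / fact n = 0" for n
    using coef_bound[OF holo' _ _ , of "1/4" 0 n] z by simp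
  have "(\<lambda>n. (deriv ^^ n) \<psi> 0 / fact n * (1 - 0)^n) sums \<psi> 1"
    by (rule holomorphic_power_series[OF holo]) auto
  then have "(\<lambda>n. 0) sums \<psi> 1" using c0 by simp
  then show ?thesis using sums_zero sums_unique2 by metis
qed

lemma vec_zero:
  fixes h :: "'x::complex_banach \<Rightarrow> 'f::complex_banach"
  assumes hh: "banach_holomorphic_on h S"
    and sub: "\<And>u. u \<in> ball 0 (5/3) \<Longrightarrow> b + u *\<^sub>C w \<in> S"
    and z: "\<And>u. u \<in> ball 0 (1/3) \<Longrightarrow> h (b + u *\<^sub>C w) = 0"
  shows "h (b + w) = 0"
proof -
  have "norm (h (b + w)) \<le> 0"
  proof (rule vec_bound)
    fix l :: "'f \<Rightarrow> real" assume l: "bounded_linear l"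
    interpret L: bounded_linear "lc l" by (rule lc_bounded_linear[OF l])
    have zz: "lc l (h (b + u *\<^sub>C w)) = 0" if "u \<in> ball 0 (1/3)" for u
      using z[OF that] L.zero by simp
    have "(\<lambda>u. lc l (h (b + u *\<^sub>C w))) 1 = 0"
      by (rule scalar_zero[OF line_holo[OF hh l sub] zz])
    then show "cmod (lc l (h (b + w))) \<le> 0" by simp
  qed
  then show ?thesis by simp
qed

lemma scalar_TC2:
  fixes \<psi> :: "complex \<Rightarrow> complex"
  assumes holo: "\<psi> holomorphic_on ball 0 (5/3)"
    and bdA: "\<And>z. z \<in> ball 0 (5/3) \<Longrightarrow> cmod (\<psi> z) \<le> A"
    and s: "0 < s" "s \<le> 1"
    and bdE: "\<And>z. z \<in> ball 0 s \<Longrightarrow> cmod (\<psi> z) \<le> E"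
  shows "cmod (\<psi> 1) \<le> E * K * (2/s)^K + 3 * A * (2/3)^K"
proof -
  define c where "c n = (deriv ^^ n) \<psi> 0 / fact n" for n
  have E0: "0 \<le> E" using bdE[of 0] s by (smt (verit) centre_in_ball norm_ge_zero)
  have cA: "cmod (c n) \<le> A * (2/3)^n" for n
    using coef_bound[OF holo _ _ bdA, of "3/2" n] by (simp add: c_def power_one_over field_simps)
  have holo': "\<psi> holomorphic_on ball 0 s" by (rule holomorphic_on_subset[OF holo]) (use s in auto)
  have cE: "cmod (c n) \<le> E * (2/s)^n" for n
    using coef_bound[OF holo' _ _ bdE, of "s/2" n] s by (simp add: c_def power_divide field_simps)
  have S: "c sums \<psi> 1"
    using holomorphic_power_series[OF holo, of 1] by (simp add: c_def[abs_def])
  have T: "(\<lambda>i. c (i+K)) sums (\<psi> 1 - (\<Sum>i<K. c i))"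
    using sums_iff_shift[of c K "\<psi> 1 - (\<Sum>i<K. c i)"] S by simp
  have G: "(\<lambda>i. (A * (2/3)^K) * (2/3)^i) sums ((A * (2/3)^K) * (1 / (1 - 2/3)))"
    by (rule sums_mult[OF geometric_sums]) auto
  have tail: "cmod (\<psi> 1 - (\<Sum>i<K. c i)) \<le> (A * (2/3)^K) * (1 / (1 - 2/3))"
  proof (rule sums_norm_le[OF T G])
    fix i show "norm (c (i+K)) \<le> (A * (2/3)^K) * (2/3)^i"
      using cA[of "i+K"] by (simp add: power_add mult_ac)
  qed
  have head: "cmod (\<Sum>i<K. c i) \<le> E * K * (2/s)^K"
  proof -
    have "cmod (\<Sum>i<K. c i) \<le> (\<Sum>i<K. cmod (c i))" by (rule norm_sum)
    also have "\<dots> \<le> (\<Sum>i<K. E * (2/s)^K)"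
    proof (rule sum_mono)
      fix i assume "i \<in> {..<K}"
      have "(2/s)^i \<le> (2/s)^K" using s \<open>i \<in> {..<K}\<close> by (intro power_increasing) auto
      then show "cmod (c i) \<le> E * (2/s)^K" using cE[of i] E0 by (meson mult_left_mono order_trans)
    qed
    also have "\<dots> = E * K * (2/s)^K" by simp
    finally show ?thesis .
  qed
  have "cmod (\<psi> 1) \<le> cmod (\<Sum>i<K. c i) + cmod (\<psi> 1 - (\<Sum>i<K. c i))"
    by (metis add.commute diff_add_cancel norm_triangle_ineq)
  also have "\<dots> \<le> E * K * (2/s)^K + 3 * A * (2/3)^K" using head tail by simp
  finally show ?thesis .
qed

lemma vec_TC2:
  fixes h :: "'x::complex_banach \<Rightarrow> 'f::complex_banach"
  assumes hh: "banach_holomorphic_on h (ball b R)" and R: "0 < R"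
    and bdA: "\<And>x. x \<in> ball b R \<Longrightarrow> norm (h x) \<le> A"
    and d: "0 < d" "d \<le> 3*R/5"
    and bdE: "\<And>x. x \<in> ball b d \<Longrightarrow> norm (h x) \<le> E"
    and w: "norm w < 3*R/5"
  shows "norm (h (b + w)) \<le> 2*E*K*(6*R/(5*d))^K + 6*A*(2/3)^K"
proof (rule vec_bound)
  fix l :: "'f \<Rightarrow> real" assume l: "bounded_linear l" and lb: "\<forall>x. \<bar>l x\<bar> \<le> norm x"
  define s where "s = 5*d/(3*R)"
  have s: "0 < s" "s \<le> 1" using d R by (auto simp: s_def field_simps)
  define \<psi> where "\<psi> u = lc l (h (b + u *\<^sub>C w))" for u
  have sub: "b + u *\<^sub>C w \<in> ball b R" if "u \<in> ball 0 (5/3)" for u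
  proof -
    have "cmod u \<le> 5/3" using that by simp
    then have "norm (u *\<^sub>C w) \<le> (5/3) * norm w" unfolding norm_scaleC by (rule mult_right_mono) simp
    also have "\<dots> < R" using w by simp
    finally show ?thesis by (simp add: dist_norm)
  qed
  have sub2: "b + u *\<^sub>C w \<in> ball b d" if "u \<in> ball 0 s" for u
  proof -
    have "norm (u *\<^sub>C w) \<le> cmod u * (3*R/5)" unfolding norm_scaleC using w by (intro mult_left_mono) auto
    also have "\<dots> < s * (3*R/5)" using that R by (intro mult_strict_right_mono) auto
    also have "\<dots> = d" using R by (simp add: s_def)
    finally show ?thesis by (simp add: dist_norm)
  qed
  have holo: "\<psi> holomorphic_on ball 0 (5/3)"
    unfolding \<psi>_def by (rule line_holo[OF hh l sub])
  have bA: "cmod (\<psi> u) \<le> 2 * A" if "u \<in> ball 0 (5/3)" for u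
  proof -
    have "cmod (\<psi> u) \<le> 2 * norm (h (b + u *\<^sub>C w))" unfolding \<psi>_def by (rule lc_norm) (use lb in auto)
    also have "\<dots> \<le> 2 * A" using bdA[OF sub[OF that]] by simp
    finally show ?thesis .
  qed
  have bE: "cmod (\<psi> u) \<le> 2 * E" if "u \<in> ball 0 s" for u
  proof -
    have "cmod (\<psi> u) \<le> 2 * norm (h (b + u *\<^sub>C w))" unfolding \<psi>_def by (rule lc_norm) (use lb in auto)
    also have "\<dots> \<le> 2 * E" using bdE[OF sub2[OF that]] by simp
    finally show ?thesis .
  qed
  have "cmod (\<psi> 1) \<le> (2*E) * K * (2/s)^K + 3 * (2*A) * (2/3)^K" by (rule scalar_TC2[OF holo bA s bE])
  moreover have "2/s = 6*R/(5*d)" using d R by (simp add: s_def field_simps)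
  ultimately show "cmod (lc l (h (b + w))) \<le> 2*E*K*(6*R/(5*d))^K + 6*A*(2/3)^K" by (simp add: \<psi>_def)
qed

lemma baire_nat:
  fixes T :: "nat \<Rightarrow> 'a::banach set"
  assumes cl: "\<And>n. closed (T n)" and un: "\<Union>(range T) = UNIV"
  shows "\<exists>n x d. d > 0 \<and> ball x d \<subseteq> T n"
proof (rule ccontr)
  assume no: "\<not> ?thesis"
  have int: "interior (T n) = {}" for n
  proof (rule ccontr)
    assume "interior (T n) \<noteq> {}"
    then obtain x where "x \<in> interior (T n)" by blast
    then obtain d where "d > 0" "ball x d \<subseteq> T n" by (meson mem_interior)
    then show False using no by blast
  qed
  have cm: "completely_metrizable_space (euclidean :: 'a topology) \<or>
      locally_compact_space (euclidean :: 'a topology) \<and> regular_space (euclidean :: 'a topology)"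
    using completely_metrizable_space_euclidean by blast
  have ct: "countable (range T)" by simp
  have each: "closedin euclidean S \<and> euclidean interior_of S = {}" if "S \<in> range T" for S
  proof -
    from that obtain n where n: "S = T n" by blast
    have "closedin euclidean S" using cl[of n] n closed_closedin by metis
    moreover have "euclidean interior_of S = {}" using int[of n] n by simp
    ultimately show ?thesis by blast
  qed
  have "euclidean interior_of \<Union>(range T) = {}"
    by (rule Baire_category_alt[OF cm ct each])
  then have "interior (UNIV :: 'a set) = {}" using un by simp
  then show False by simp
qed

lemma geo:
  fixes c \<xi> :: "'a::real_normed_vector"
  assumes nr: "norm (\<xi> - c) = r" and rho: "0 < \<rho>" "\<rho> \<le> r"
    and b_def: "b = \<xi> - (\<rho>/(6*r)) *\<^sub>R (\<xi> - c)"
  shows "norm (b - \<xi>) = \<rho>/6"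
    and "ball b (\<rho>/6) \<subseteq> ball c r"
    and "ball b (5*\<rho>/6) \<subseteq> ball \<xi> \<rho>"
    and "\<And>z. z \<in> ball \<xi> (\<rho>/3) \<Longrightarrow> norm (z - b) < \<rho>/2"
proof -
  have r: "0 < r" using rho by simp
  have nb: "norm (b - \<xi>) = \<rho>/6"
  proof -
    have "b - \<xi> = - ((\<rho>/(6*r)) *\<^sub>R (\<xi> - c))" by (simp add: b_def)
    then have "norm (b - \<xi>) = \<rho>/(6*r) * r" using rho r nr by simp
    then show ?thesis using r by simp
  qed
  have nbc: "norm (b - c) = r - \<rho>/6"
  proof -
    have "b - c = (1 - \<rho>/(6*r)) *\<^sub>R (\<xi> - c)" by (simp add: b_def algebra_simps)
    moreover have "0 \<le> 1 - \<rho>/(6*r)" using rho r by (simp add: field_simps)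
    ultimately have "norm (b - c) = (1 - \<rho>/(6*r)) * norm (\<xi> - c)" by (simp only: norm_scaleR abs_of_nonneg)
    then have "norm (b - c) = (1 - \<rho>/(6*r)) * r" using nr by simp
    also have "\<dots> = r - \<rho>/(6*r) * r" by (simp add: left_diff_distrib)
    also have "\<rho>/(6*r) * r = \<rho>/6" using r by simp
    finally show ?thesis .
  qed
  show "norm (b - \<xi>) = \<rho>/6" by (fact nb)
  show "ball b (\<rho>/6) \<subseteq> ball c r"
  proof
    fix x assume "x \<in> ball b (\<rho>/6)"
    then have "norm (x - b) < \<rho>/6" by (simp add: dist_norm norm_minus_commute)
    moreover have "norm (x - c) \<le> norm (x - b) + norm (b - c)" using norm_triangle_ineq[of "x - b" "b - c"] by simp
    ultimately show "x \<in> ball c r" using nbc by (simp add: dist_norm norm_minus_commute)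
  qed
  show "ball b (5*\<rho>/6) \<subseteq> ball \<xi> \<rho>"
  proof
    fix x assume "x \<in> ball b (5*\<rho>/6)"
    then have "norm (x - b) < 5*\<rho>/6" by (simp add: dist_norm norm_minus_commute)
    moreover have "norm (x - \<xi>) \<le> norm (x - b) + norm (b - \<xi>)" using norm_triangle_ineq[of "x - b" "b - \<xi>"] by simp
    ultimately show "x \<in> ball \<xi> \<rho>" using nb by (simp add: dist_norm norm_minus_commute)
  qed
  fix z assume "z \<in> ball \<xi> (\<rho>/3)"
  then have "norm (z - \<xi>) < \<rho>/3" by (simp add: dist_norm norm_minus_commute)
  moreover have "norm (z - b) \<le> norm (z - \<xi>) + norm (\<xi> - b)" using norm_triangle_ineq[of "z - \<xi>" "\<xi> - b"] by simp
  ultimately show "norm (z - b) < \<rho>/2" using nb by (simp add: norm_minus_commute)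
qed

lemma uniq_ext:
  fixes h :: "'x::complex_banach \<Rightarrow> 'f::complex_banach"
  assumes nr: "norm (\<xi> - c) = r" and rho: "0 < \<rho>" "\<rho> \<le> r"
    and hh: "banach_holomorphic_on h (ball c r \<union> ball \<xi> \<rho>)"
    and h0: "\<And>z. z \<in> ball c r \<Longrightarrow> h z = 0"
    and z: "z \<in> ball \<xi> (\<rho>/3)"
  shows "h z = 0"
proof -
  define b where "b = \<xi> - (\<rho>/(6*r)) *\<^sub>R (\<xi> - c)"
  note G = geo[OF nr rho b_def]
  define w where "w = z - b"
  have nw: "norm w < \<rho>/2" using G(4)[OF z] by (simp add: w_def)
  have "h (b + w) = 0"
  proof (rule vec_zero[OF hh])
    fix u :: complex assume "u \<in> ball 0 (5/3)"
    then have "cmod u \<le> 5/3" by simp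
    then have "norm (u *\<^sub>C w) \<le> 5/3 * norm w" unfolding norm_scaleC by (rule mult_right_mono) simp
    also have "\<dots> < 5*\<rho>/6" using nw by simp
    finally have "b + u *\<^sub>C w \<in> ball b (5*\<rho>/6)" by (simp add: dist_norm)
    then show "b + u *\<^sub>C w \<in> ball c r \<union> ball \<xi> \<rho>" using G(3) by blast
  next
    fix u :: complex assume "u \<in> ball 0 (1/3)"
    then have "cmod u \<le> 1/3" by simp
    then have "norm (u *\<^sub>C w) \<le> 1/3 * norm w" unfolding norm_scaleC by (rule mult_right_mono) simp
    also have "\<dots> < \<rho>/6" using nw by simp
    finally have "b + u *\<^sub>C w \<in> ball b (\<rho>/6)" by (simp add: dist_norm)
    then show "h (b + u *\<^sub>C w) = 0" using G(2) h0 by blast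
  qed
  then show ?thesis by (simp add: w_def)
qed

definition hext :: "('x::complex_banach \<Rightarrow> ('e::complex_banach \<Rightarrow>\<^sub>L 'f::complex_banach)) \<Rightarrow> 'x \<Rightarrow> real \<Rightarrow> 'x \<Rightarrow> 'e \<Rightarrow> real \<Rightarrow> real \<Rightarrow> ('x \<Rightarrow> 'f) \<Rightarrow> bool" where
  "hext P c r \<xi> e \<rho> M g \<longleftrightarrow> banach_holomorphic_on g (ball c r \<union> ball \<xi> \<rho>) \<and>
     (\<forall>z\<in>ball c r. g z = blinfun_apply (P z) e) \<and> (\<forall>z\<in>ball \<xi> \<rho>. norm (g z) \<le> M)"

lemma aux_cancel: "(a::real) \<noteq> 0 \<Longrightarrow> a * (x / (2 * a)) = x/2"
  by (simp add: field_simps)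

lemma closure_ext:
  fixes P :: "'x::complex_banach \<Rightarrow> ('e::complex_banach \<Rightarrow>\<^sub>L 'f::complex_banach)"
  assumes nr: "norm (\<xi> - c) = r" and rho: "0 < \<rho>" "\<rho> \<le> r"
    and holo: "banach_holomorphic_on P (ball c r)"
    and e: "e \<in> closure {e. \<exists>g. hext P c r \<xi> e \<rho> Mb g}"
  shows "\<exists>g. hext P c r \<xi> e (\<rho>/3) Mb g"
proof -
  obtain es where es: "\<And>j. es j \<in> {e. \<exists>g. hext P c r \<xi> e \<rho> Mb g}" "es \<longlonglongrightarrow> e"
    using e closure_sequential by blast
  then have "\<forall>j. \<exists>g. hext P c r \<xi> (es j) \<rho> Mb g" by blast
  then obtain gs where gs: "\<And>j. hext P c r \<xi> (es j) \<rho> Mb (gs j)" by metis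
  have gh: "\<And>j. banach_holomorphic_on (gs j) (ball c r \<union> ball \<xi> \<rho>)"
   and gB: "\<And>j z. z \<in> ball c r \<Longrightarrow> gs j z = blinfun_apply (P z) (es j)"
   and gb: "\<And>j z. z \<in> ball \<xi> \<rho> \<Longrightarrow> norm (gs j z) \<le> Mb" using gs unfolding hext_def by auto
  have Mb0: "0 \<le> Mb" using gb[of \<xi> 0] rho norm_ge_zero order_trans by (metis centre_in_ball)
  define b where "b = \<xi> - (\<rho>/(6*r)) *\<^sub>R (\<xi> - c)"
  note G = geo[OF nr rho b_def]
  define R where "R = 5*\<rho>/6"
  have R: "0 < R" using rho by (simp add: R_def)
  have bB: "b \<in> ball c r" using G(2) rho by (meson centre_in_ball subsetD zero_less_divide_iff zero_less_numeral)
  have "continuous (at b) P" by (rule bh_cont[OF holo bB])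
  then obtain d0 where d0: "d0 > 0" "\<And>x. dist x b < d0 \<Longrightarrow> dist (P x) (P b) < 1"
    unfolding continuous_at_eps_delta by (meson zero_less_one)
  define d where "d = min d0 (\<rho>/6)"
  have d: "0 < d" "d \<le> 3*R/5" using d0 rho by (auto simp: d_def R_def)
  define MP where "MP = norm (P b) + 1"
  have MP0: "0 \<le> MP" by (simp add: MP_def add_nonneg_nonneg)
  have Pbd: "norm (P x) \<le> MP" if "x \<in> ball b d" for x
  proof -
    have "dist x b < d0" using that by (simp add: d_def dist_commute)
    then have "norm (P x - P b) < 1" using d0(2) by (simp add: dist_norm)
    moreover have "norm (P x) \<le> norm (P x - P b) + norm (P b)" using norm_triangle_ineq[of "P x - P b" "P b"] by simp
    ultimately show ?thesis by (simp add: MP_def)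
  qed
  have bdB: "ball b d \<subseteq> ball c r" using G(2) by (rule subset_trans[rotated]) (simp add: d_def subset_ball)
  have bRsub: "ball b R \<subseteq> ball c r \<union> ball \<xi> \<rho>" using G(3) by (auto simp: R_def)
  have cauchy: "Cauchy (\<lambda>j. gs j z)" if z: "z \<in> ball \<xi> (\<rho>/3)" for z
  proof (rule CauchyI)
    fix \<eta> :: real assume eta: "\<eta> > 0"
    define w where "w = z - b"
    have nw: "norm w < 3*R/5" using G(4)[OF z] by (simp add: w_def R_def)
    have "\<exists>K. (2/3::real)^K < \<eta> / (2 * (12 * Mb + 1))"
      by (rule real_arch_pow_inv) (use eta Mb0 in auto)
    then obtain K where K: "(2/3::real)^K < \<eta> / (2 * (12 * Mb + 1))" by blast
    define Cs where "Cs = 2 * MP * K * (6*R/(5*d))^K"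
    have Cs0: "0 \<le> Cs" using MP0 R d by (simp add: Cs_def)
    have "Cauchy es" using es(2) by (rule LIMSEQ_imp_Cauchy)
    then obtain N where N: "\<forall>m\<ge>N. \<forall>n\<ge>N. norm (es m - es n) < \<eta> / (2 * (Cs + 1))"
      using CauchyD[of es "\<eta> / (2 * (Cs + 1))"] eta Cs0 by auto
    show "\<exists>M. \<forall>m\<ge>M. \<forall>n\<ge>M. norm (gs m z - gs n z) < \<eta>"
    proof (intro exI allI impI)
      fix m n assume mn: "N \<le> m" "N \<le> n"
      define hh where "hh x = gs m x - gs n x" for x
      have hholo: "banach_holomorphic_on hh (ball b R)"
        unfolding hh_def by (rule bh_subset[OF bh_diff[OF gh gh] bRsub])
      have hA: "norm (hh x) \<le> 2 * Mb" if "x \<in> ball b R" for x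
      proof -
        have x: "x \<in> ball \<xi> \<rho>" using that G(3) by (auto simp: R_def)
        have "norm (hh x) \<le> norm (gs m x) + norm (gs n x)" unfolding hh_def by (rule norm_triangle_ineq4)
        also have "\<dots> \<le> Mb + Mb" using gb[OF x] by (intro add_mono)
        finally show ?thesis by simp
      qed
      have hE: "norm (hh x) \<le> MP * norm (es m - es n)" if "x \<in> ball b d" for x
      proof -
        have x: "x \<in> ball c r" using that bdB by blast
        have "hh x = blinfun_apply (P x) (es m - es n)"
          by (simp add: hh_def gB[OF x] blinfun.diff_right)
        then have "norm (hh x) \<le> norm (P x) * norm (es m - es n)" by (simp add: norm_blinfun)
        also have "\<dots> \<le> MP * norm (es m - es n)" using Pbd[OF that] by (rule mult_right_mono) simp
        finally show ?thesis .
      qed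
      have "norm (hh (b + w)) \<le> 2*(MP * norm (es m - es n))*K*(6*R/(5*d))^K + 6*(2*Mb)*(2/3)^K"
        by (rule vec_TC2[OF hholo R hA d hE nw])
      also have "\<dots> = Cs * norm (es m - es n) + 12 * Mb * (2/3)^K" by (simp add: Cs_def mult_ac)
      also have "\<dots> < \<eta>/2 + \<eta>/2"
      proof (rule add_le_less_mono)
        have "norm (es m - es n) < \<eta> / (2 * (Cs + 1))" using N mn by blast
        then have "Cs * norm (es m - es n) \<le> Cs * (\<eta> / (2 * (Cs + 1)))"
          using Cs0 by (intro mult_left_mono) auto
        also have "\<dots> = (\<eta>/2) * (Cs / (Cs + 1))" using Cs0 by (simp add: field_simps)
        also have "\<dots> \<le> (\<eta>/2) * 1" using Cs0 eta by (intro mult_left_mono) auto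
        finally show "Cs * norm (es m - es n) \<le> \<eta>/2" by simp
        have "12 * Mb * (2/3)^K \<le> (12 * Mb + 1) * (2/3::real)^K" by (simp add: algebra_simps)
        also have "\<dots> < (12 * Mb + 1) * (\<eta> / (2 * (12 * Mb + 1)))"
          using K Mb0 by (intro mult_strict_left_mono) auto
        also have "\<dots> = \<eta>/2"
          by (rule aux_cancel) (use Mb0 in simp)
        finally show "12 * Mb * (2/3)^K < \<eta>/2" .
      qed
      finally show "norm (gs m z - gs n z) < \<eta>" by (simp add: hh_def w_def)
    qed
  qed
  define G0 where "G0 z = lim (\<lambda>j. gs j z)" for z
  have G0L: "(\<lambda>j. gs j z) \<longlonglongrightarrow> G0 z" if "z \<in> ball \<xi> (\<rho>/3)" for z
    using cauchy[OF that] unfolding G0_def Cauchy_convergent_iff convergent_LIMSEQ_iff .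
  have U3: "ball \<xi> (\<rho>/3) \<subseteq> ball c r \<union> ball \<xi> \<rho>" using rho by (auto simp: subset_ball)
  have U3': "ball \<xi> (\<rho>/3) \<subseteq> ball \<xi> \<rho>" using rho by (simp add: subset_ball)
  have G0holo: "banach_holomorphic_on G0 (ball \<xi> (\<rho>/3))"
  proof (rule holo_limit[of "ball \<xi> (\<rho>/3)" gs Mb G0])
    show "open (ball \<xi> (\<rho>/3))" by simp
    show "banach_holomorphic_on (gs j) (ball \<xi> (\<rho>/3))" for j by (rule bh_subset[OF gh U3])
    show "norm (gs j x) \<le> Mb" if "x \<in> ball \<xi> (\<rho>/3)" for j x using gb that U3' by blast
    show "(\<lambda>j. gs j x) \<longlonglongrightarrow> G0 x" if "x \<in> ball \<xi> (\<rho>/3)" for x by (rule G0L[OF that])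
  qed
  have G0B: "G0 z = blinfun_apply (P z) e" if "z \<in> ball c r" "z \<in> ball \<xi> (\<rho>/3)" for z
  proof -
    have "(\<lambda>j. blinfun_apply (P z) (es j)) \<longlonglongrightarrow> blinfun_apply (P z) e"
      by (rule bounded_linear.tendsto[OF blinfun.bounded_linear_right es(2)])
    moreover have "(\<lambda>j. blinfun_apply (P z) (es j)) = (\<lambda>j. gs j z)" using gB[OF that(1)] by simp
    ultimately show ?thesis using G0L[OF that(2)] LIMSEQ_unique by metis
  qed
  define Gf where "Gf z = (if z \<in> ball c r then blinfun_apply (P z) e else G0 z)" for z
  have h1: "banach_holomorphic_on Gf (ball c r)"
    by (rule bh_cong[OF open_ball bh_apply[OF holo]]) (simp add: Gf_def)
  have h2: "banach_holomorphic_on Gf (ball \<xi> (\<rho>/3))"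
    by (rule bh_cong[OF open_ball G0holo]) (simp add: Gf_def G0B)
  have "hext P c r \<xi> e (\<rho>/3) Mb Gf"
    unfolding hext_def
  proof (intro conjI ballI)
    show "banach_holomorphic_on Gf (ball c r \<union> ball \<xi> (\<rho>/3))" by (rule bh_union[OF h1 h2])
    show "Gf z = blinfun_apply (P z) e" if "z \<in> ball c r" for z using that by (simp add: Gf_def)
    fix z assume z: "z \<in> ball \<xi> (\<rho>/3)"
    have "Gf z = G0 z" using z by (simp add: Gf_def G0B)
    moreover have "norm (G0 z) \<le> Mb"
      by (rule LIMSEQ_le_const2[OF tendsto_norm[OF G0L[OF z]]]) (use gb U3' z in blast)
    ultimately show "norm (Gf z) \<le> Mb" by simp
  qed
  then show ?thesis by blast
qed

lemma ext_exists:
  fixes P :: "'x::complex_banach \<Rightarrow> ('e::complex_banach \<Rightarrow>\<^sub>L 'f::complex_banach)"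
  assumes r: "0 < r"
    and cont: "\<exists>W g. open W \<and> \<xi> \<in> W \<and> banach_holomorphic_on g (ball c r \<union> W) \<and>
                   (\<forall>z\<in>ball c r. g z = blinfun_apply (P z) e)"
  shows "\<exists>n::nat. \<exists>g. hext P c r \<xi> e (r / (real n + 1)) (real n + 1) g"
proof -
  from cont obtain W g where W: "open W" "\<xi> \<in> W" and gh: "banach_holomorphic_on g (ball c r \<union> W)"
    and gB: "\<forall>z\<in>ball c r. g z = blinfun_apply (P z) e" by blast
  have "continuous (at \<xi>) g" by (rule bh_cont[OF gh]) (use W in blast)
  then obtain d1 where d1: "d1 > 0" "\<And>x. dist x \<xi> < d1 \<Longrightarrow> dist (g x) (g \<xi>) < 1"
    unfolding continuous_at_eps_delta by (meson zero_less_one)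
  obtain d2 where d2: "d2 > 0" "ball \<xi> d2 \<subseteq> W" using W open_contains_ball by blast
  define m where "m = min d1 d2"
  have m: "0 < m" using d1 d2 by (simp add: m_def)
  obtain n :: nat where n: "max (r / m) (norm (g \<xi>) + 1) < real n" using reals_Archimedean2 by blast
  define \<rho> where "\<rho> = r / (real n + 1)"
  have "r / m < real n + 1" using n by simp
  then have "r < (real n + 1) * m" using m by (simp add: divide_less_eq mult.commute)
  then have rho: "\<rho> < m" unfolding \<rho>_def by (simp add: divide_less_eq mult.commute)
  have "hext P c r \<xi> e \<rho> (real n + 1) g"
    unfolding hext_def
  proof (intro conjI ballI)
    have "\<rho> \<le> d2" using rho by (simp add: m_def)
    then have "ball \<xi> \<rho> \<subseteq> ball \<xi> d2" by (rule subset_ball)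
    then have bW: "ball \<xi> \<rho> \<subseteq> W" using d2(2) by blast
    show "banach_holomorphic_on g (ball c r \<union> ball \<xi> \<rho>)" by (rule bh_subset[OF gh]) (use bW in blast)
    show "g z = blinfun_apply (P z) e" if "z \<in> ball c r" for z using gB that by blast
    fix z assume "z \<in> ball \<xi> \<rho>"
    then have "dist z \<xi> < d1" using rho by (simp add: m_def dist_commute)
    then have "norm (g z - g \<xi>) < 1" using d1 by (simp add: dist_norm)
    moreover have "norm (g z) \<le> norm (g z - g \<xi>) + norm (g \<xi>)" using norm_triangle_ineq[of "g z - g \<xi>" "g \<xi>"] by simp
    ultimately show "norm (g z) \<le> real n + 1" using n by simp
  qed
  then show ?thesis unfolding \<rho>_def by blast
qed

lemma scale_ext:
  fixes P :: "'x::complex_banach \<Rightarrow> ('e::complex_banach \<Rightarrow>\<^sub>L 'f::complex_banach)"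
  assumes d: "0 < d" and Mb: "0 \<le> Mb"
    and ex: "\<And>e'. e' \<in> ball e0 d \<Longrightarrow> \<exists>g. hext P c r \<xi> e' \<rho> Mb g"
  shows "\<exists>g. hext P c r \<xi> e \<rho> (4 * Mb / d * norm e) g"
proof (cases "e = 0")
  case True
  have "hext P c r \<xi> e \<rho> (4 * Mb / d * norm e) (\<lambda>z. 0)"
    unfolding hext_def using True by (simp add: bh_zero blinfun.zero_right)
  then show ?thesis by blast
next
  case False
  define t where "t = d / (2 * norm e)"
  have t: "0 < t" using d False by (simp add: t_def)
  have "e0 + t *\<^sub>R e \<in> ball e0 d" using t d False by (simp add: dist_norm t_def)
  then obtain g1 where g1: "hext P c r \<xi> (e0 + t *\<^sub>R e) \<rho> Mb g1" using ex by blast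
  obtain g0 where g0: "hext P c r \<xi> e0 \<rho> Mb g0" using ex d by (meson centre_in_ball)
  define g where "g z = (1/t) *\<^sub>R (g1 z - g0 z)" for z
  have "hext P c r \<xi> e \<rho> (4 * Mb / d * norm e) g"
    unfolding hext_def
  proof (intro conjI ballI)
    show "banach_holomorphic_on g (ball c r \<union> ball \<xi> \<rho>)"
      unfolding g_def by (intro bh_scaleR bh_diff) (use g1 g0 in \<open>auto simp: hext_def\<close>)
    fix z assume z: "z \<in> ball c r"
    have "g z = (1/t) *\<^sub>R (blinfun_apply (P z) (e0 + t *\<^sub>R e) - blinfun_apply (P z) e0)"
      using g1 g0 z by (simp add: hext_def g_def)
    also have "\<dots> = blinfun_apply (P z) e" using t by (simp add: blinfun.add_right blinfun.scaleR_right)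
    finally show "g z = blinfun_apply (P z) e" .
  next
    fix z assume z: "z \<in> ball \<xi> \<rho>"
    have "norm (g1 z - g0 z) \<le> norm (g1 z) + norm (g0 z)" by (rule norm_triangle_ineq4)
    also have "\<dots> \<le> Mb + Mb" using g1 g0 z by (intro add_mono) (auto simp: hext_def)
    finally have "norm (g1 z - g0 z) \<le> 2 * Mb" by simp
    then have "(1/t) * norm (g1 z - g0 z) \<le> (1/t) * (2 * Mb)" using t by (intro mult_left_mono) auto
    then have "norm (g z) \<le> (1/t) * (2 * Mb)" using t by (simp add: g_def)
    also have "\<dots> = 4 * Mb / d * norm e" using d False by (simp add: t_def field_simps)
    finally show "norm (g z) \<le> 4 * Mb / d * norm e" .
  qed
  then show ?thesis by blast
qed

lemma main_construct:
  fixes P :: "'x::complex_banach \<Rightarrow> ('e::complex_banach \<Rightarrow>\<^sub>L 'f::complex_banach)"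
  assumes nr: "norm (\<xi> - c) = r" and rho: "0 < \<rho>" "\<rho> \<le> r"
    and hom: "\<forall>z\<in>ball c r. is_hom (P z)"
    and holo: "banach_holomorphic_on P (ball c r)"
    and Kc: "0 \<le> Kc"
    and ex: "\<And>e. \<exists>g. hext P c r \<xi> e \<rho> (Kc * norm e) g"
  shows "\<exists>Q. banach_holomorphic_on Q (ball c r \<union> ball \<xi> (\<rho>/3)) \<and>
             (\<forall>z\<in>ball c r \<union> ball \<xi> (\<rho>/3). is_hom (Q z)) \<and> (\<forall>z\<in>ball c r. Q z = P z)"
proof -
  define W where "W = ball \<xi> (\<rho>/3)"
  define G where "G e = (SOME g. hext P c r \<xi> e \<rho> (Kc * norm e) g)" for e
  have GH: "hext P c r \<xi> e \<rho> (Kc * norm e) (G e)" for e unfolding G_def by (rule someI_ex[OF ex])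
  have Gh: "banach_holomorphic_on (G e) (ball c r \<union> ball \<xi> \<rho>)" for e using GH unfolding hext_def by blast
  have GB: "G e z = blinfun_apply (P z) e" if "z \<in> ball c r" for e z using GH that unfolding hext_def by blast
  have Gbd: "norm (G e z) \<le> Kc * norm e" if "z \<in> ball \<xi> \<rho>" for e z using GH that unfolding hext_def by blast
  have WB: "W \<subseteq> ball \<xi> \<rho>" using rho by (simp add: W_def subset_ball)
  have uq: "g1 z = g2 z" if "banach_holomorphic_on g1 (ball c r \<union> ball \<xi> \<rho>)"
      "banach_holomorphic_on g2 (ball c r \<union> ball \<xi> \<rho>)" "\<And>z. z \<in> ball c r \<Longrightarrow> g1 z = g2 z" "z \<in> W"
    for g1 g2 :: "'x \<Rightarrow> 'f" and z
  proof -
    have "(\<lambda>x. g1 x - g2 x) z = 0"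
      by (rule uniq_ext[OF nr rho bh_diff[OF that(1,2)]]) (use that(3,4) in \<open>auto simp: W_def\<close>)
    then show ?thesis by simp
  qed
  have Gadd: "G (e1 + e2) z = G e1 z + G e2 z" if "z \<in> W" for e1 e2 z
    by (rule uq[OF Gh bh_add[OF Gh Gh] _ that]) (simp add: GB blinfun.add_right)
  have Gscl: "G (t *\<^sub>R e) z = t *\<^sub>R G e z" if "z \<in> W" for t e z
    by (rule uq[OF Gh bh_scaleR[OF Gh] _ that]) (simp add: GB blinfun.scaleR_right)
  have GC: "G (a *\<^sub>C e) z = a *\<^sub>C G e z" if "z \<in> W" for a e z
  proof (rule uq[OF Gh bh_scaleC[OF Gh] _ that])
    fix x assume x: "x \<in> ball c r"
    have "complex_linear (blinfun_apply (P x))" using hom x unfolding is_hom_def by blast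
    then show "G (a *\<^sub>C e) x = a *\<^sub>C G e x" using x by (simp add: GB complex_linear_def)
  qed
  have blin: "bounded_linear (\<lambda>e. G e z)" if "z \<in> W" for z
  proof (rule bounded_linear_intro[of _ Kc])
    show "G (x + y) z = G x z + G y z" for x y by (rule Gadd[OF that])
    show "G (t *\<^sub>R x) z = t *\<^sub>R G x z" for t x by (rule Gscl[OF that])
    show "norm (G x z) \<le> norm x * Kc" for x using Gbd[of z x] that WB by (auto simp: mult.commute)
  qed
  define Q where "Q z = (if z \<in> ball c r then P z else Blinfun (\<lambda>e. G e z))" for z
  have QW: "blinfun_apply (Q z) e = G e z" if "z \<in> W" for z e
    using that by (simp add: Q_def GB bounded_linear_Blinfun_apply[OF blin[OF that]])
  have QB: "Q z = P z" if "z \<in> ball c r" for z using that by (simp add: Q_def)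
  have homQ: "is_hom (Q z)" if "z \<in> ball c r \<union> W" for z
  proof (cases "z \<in> ball c r")
    case True then show ?thesis using hom QB by simp
  next
    case False then have zW: "z \<in> W" using that by blast
    show ?thesis unfolding is_hom_def complex_linear_def
    proof (intro allI)
      fix a e show "blinfun_apply (Q z) (a *\<^sub>C e) = a *\<^sub>C blinfun_apply (Q z) e"
        using QW[OF zW] GC[OF zW] by simp
    qed
  qed
  have holoB: "banach_holomorphic_on Q (ball c r)" by (rule bh_cong[OF open_ball holo]) (simp add: QB)
  have Wopen: "open W" by (simp add: W_def)
  have holoW: "banach_holomorphic_on Q W" unfolding banach_holomorphic_on_def
  proof
    fix z assume z: "z \<in> W"
    define Rz where "Rz = \<rho>/3"
    have Rz: "0 < Rz" using rho by (simp add: Rz_def)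
    have dz: "dist \<xi> z < \<rho>/3" using z by (simp add: W_def)
    define s where "s = \<rho>/3 - dist \<xi> z"
    have s: "0 < s" using dz by (simp add: s_def)
    have ballz: "ball z Rz \<subseteq> ball c r \<union> ball \<xi> \<rho>"
    proof
      fix x assume "x \<in> ball z Rz"
      then have "dist z x < \<rho>/3" by (simp add: Rz_def)
      moreover have "dist \<xi> x \<le> dist \<xi> z + dist z x" by (rule dist_triangle)
      ultimately have "dist \<xi> x < \<rho>" using dz rho by linarith
      then show "x \<in> ball c r \<union> ball \<xi> \<rho>" by simp
    qed
    have ballz': "ball z Rz \<subseteq> ball \<xi> \<rho>"
    proof
      fix x assume "x \<in> ball z Rz"
      then have "dist z x < \<rho>/3" by (simp add: Rz_def)
      moreover have "dist \<xi> x \<le> dist \<xi> z + dist z x" by (rule dist_triangle)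
      ultimately have "dist \<xi> x < \<rho>" using dz rho by linarith
      then show "x \<in> ball \<xi> \<rho>" by simp
    qed
    have zhW: "z + h \<in> W" if "norm h < s" for h
    proof -
      have "dist \<xi> (z + h) \<le> dist \<xi> z + dist z (z + h)" by (rule dist_triangle)
      also have "dist z (z + h) = norm h" by (simp add: dist_norm)
      finally show ?thesis using that by (simp add: W_def s_def)
    qed
    have "\<forall>e. \<exists>D. (G e has_derivative D) (at z) \<and> complex_linear D"
      using Gh z WB unfolding banach_holomorphic_on_def by blast
    then obtain DG where DG: "\<And>e. (G e has_derivative DG e) (at z)" "\<And>e. complex_linear (DG e)" by metis
    have DGlin: "bounded_linear (DG e)" for e using DG(1) has_derivative_bounded_linear by blast
    have est: "norm (DG e h) \<le> 4 * (Kc * norm e) * norm h / Rz \<and>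
        (norm h \<le> Rz/4 \<longrightarrow> norm (G e (z + h) - G e z - DG e h) \<le> 16 * (Kc * norm e) * (norm h)^2 / Rz^2)"
      for e h
    proof (rule vec_L[OF bh_subset[OF Gh ballz] Rz _ DG(1) DG(2)])
      fix x assume "x \<in> ball z Rz"
      then show "norm (G e x) \<le> Kc * norm e" using ballz' Gbd by blast
    qed
    have DGadd: "DG (e1 + e2) h = DG e1 h + DG e2 h" for e1 e2 h
    proof -
      have "((\<lambda>x. G e1 x + G e2 x) has_derivative (\<lambda>h. DG e1 h + DG e2 h)) (at z)"
        by (rule has_derivative_add[OF DG(1) DG(1)])
      then have "(G (e1 + e2) has_derivative (\<lambda>h. DG e1 h + DG e2 h)) (at z)"
        by (rule has_derivative_transform_within_open[OF _ Wopen z]) (simp add: Gadd)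
      then have "DG (e1 + e2) = (\<lambda>h. DG e1 h + DG e2 h)" using has_derivative_unique DG(1) by blast
      then show ?thesis by simp
    qed
    have DGscl: "DG (t *\<^sub>R e) h = t *\<^sub>R DG e h" for t e h
    proof -
      have "((\<lambda>x. t *\<^sub>R G e x) has_derivative (\<lambda>h. t *\<^sub>R DG e h)) (at z)"
        by (rule bounded_linear.has_derivative[OF bounded_linear_scaleR_right DG(1)])
      then have "(G (t *\<^sub>R e) has_derivative (\<lambda>h. t *\<^sub>R DG e h)) (at z)"
        by (rule has_derivative_transform_within_open[OF _ Wopen z]) (simp add: Gscl)
      then have "DG (t *\<^sub>R e) = (\<lambda>h. t *\<^sub>R DG e h)" using has_derivative_unique DG(1) by blast
      then show ?thesis by simp
    qed
    have DGbd: "norm (DG e h) \<le> norm e * (4 * Kc * norm h / Rz)" for e h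
      using est[of e h] by (simp add: mult_ac)
    have DQbl: "bounded_linear (\<lambda>e. DG e h)" for h
      by (rule bounded_linear_intro[OF DGadd DGscl DGbd])
    define DQ where "DQ h = Blinfun (\<lambda>e. DG e h)" for h
    have DQapp: "blinfun_apply (DQ h) e = DG e h" for h e
      by (simp add: DQ_def bounded_linear_Blinfun_apply[OF DQbl])
    have DQlin: "bounded_linear DQ"
    proof (rule bounded_linear_intro[of _ "4 * Kc / Rz"])
      fix x y show "DQ (x + y) = DQ x + DQ y"
        by (rule blinfun_eqI) (use DGlin in \<open>simp add: DQapp blinfun.add_left linear_simps\<close>)
    next
      fix t x show "DQ (t *\<^sub>R x) = t *\<^sub>R DQ x"
        by (rule blinfun_eqI) (use DGlin in \<open>simp add: DQapp blinfun.scaleR_left linear_simps\<close>)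
    next
      fix x show "norm (DQ x) \<le> norm x * (4 * Kc / Rz)"
      proof (rule norm_blinfun_bound)
        show "0 \<le> norm x * (4 * Kc / Rz)" using Kc Rz by simp
        fix e show "norm (blinfun_apply (DQ x) e) \<le> norm x * (4 * Kc / Rz) * norm e"
          using DGbd[of e x] by (simp add: DQapp mult_ac)
      qed
    qed
    have DQcl: "complex_linear DQ" unfolding complex_linear_def
    proof (intro allI)
      fix a h show "DQ (a *\<^sub>C h) = a *\<^sub>C DQ h"
        by (rule blinfun_eqI) (use DG(2) in \<open>simp add: DQapp blinfun_apply_scaleC complex_linear_def\<close>)
    qed
    have "(Q has_derivative DQ) (at z)"
    proof (rule quad_deriv[OF DQlin])
      show "0 < min (Rz/4) s" using Rz s by simp
      show "0 \<le> 16 * Kc / Rz^2" using Kc by simp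
      fix h :: 'x assume h: "norm h < min (Rz/4) s"
      show "norm (Q (z + h) - Q z - DQ h) \<le> 16 * Kc / Rz^2 * (norm h)^2"
      proof (rule norm_blinfun_bound)
        show "0 \<le> 16 * Kc / Rz^2 * (norm h)^2" using Kc by simp
        fix e
        have zh: "z + h \<in> W" using h zhW by simp
        have "blinfun_apply (Q (z + h) - Q z - DQ h) e = G e (z + h) - G e z - DG e h"
          by (simp add: blinfun.diff_left QW[OF zh] QW[OF z] DQapp)
        then have "norm (blinfun_apply (Q (z + h) - Q z - DQ h) e) \<le> 16 * (Kc * norm e) * (norm h)^2 / Rz^2"
          using est[of e h] h by simp
        also have "\<dots> = 16 * Kc / Rz^2 * (norm h)^2 * norm e" by (simp add: field_simps)
        finally show "norm (blinfun_apply (Q (z + h) - Q z - DQ h) e) \<le> 16 * Kc / Rz^2 * (norm h)^2 * norm e" .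
      qed
    qed
    then show "\<exists>D. (Q has_derivative D) (at z) \<and> complex_linear D" using DQcl by blast
  qed
  have "banach_holomorphic_on Q (ball c r \<union> ball \<xi> (\<rho>/3))"
    using bh_union[OF holoB holoW] by (simp add: W_def)
  moreover have "\<forall>z\<in>ball c r \<union> ball \<xi> (\<rho>/3). is_hom (Q z)" using homQ by (simp add: W_def)
  ultimately show ?thesis using QB by blast
qed

theorem lemma6p1:
  fixes P :: "'x::complex_banach \<Rightarrow> ('e::complex_banach \<Rightarrow>\<^sub>L 'f::complex_banach)"
    and c \<xi> :: 'x and r :: real
  assumes r: "r > 0"
    and xi: "\<xi> \<in> frontier (ball c r)"
    and hom: "\<forall>z\<in>ball c r. is_hom (P z)"
    and holo: "banach_holomorphic_on P (ball c r)"
    and cont: "\<forall>e. \<exists>W g. open W \<and> \<xi> \<in> W \<and>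
                   banach_holomorphic_on g (ball c r \<union> W) \<and>
                   (\<forall>z\<in>ball c r. g z = blinfun_apply (P z) e)"
  shows "\<exists>W Q. open W \<and> \<xi> \<in> W \<and>
           banach_holomorphic_on Q (ball c r \<union> W) \<and>
           (\<forall>z\<in>ball c r \<union> W. is_hom (Q z)) \<and>
           (\<forall>z\<in>ball c r. Q z = P z)"
proof -
  have nr: "norm (\<xi> - c) = r" using xi r by (simp add: dist_norm norm_minus_commute)
  define S where "S n = {e. \<exists>g. hext P c r \<xi> e (r / (real n + 1)) (real n + 1) g}" for n
  have un: "\<Union>(range (\<lambda>n. closure (S n))) = UNIV"
  proof (rule set_eqI, rule iffI)
    fix e :: 'e assume "e \<in> UNIV"
    obtain n where "\<exists>g. hext P c r \<xi> e (r / (real n + 1)) (real n + 1) g"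
      using ext_exists[OF r spec[OF cont, of e]] by blast
    then have "e \<in> S n" by (simp add: S_def)
    then show "e \<in> \<Union>(range (\<lambda>n. closure (S n)))" using closure_subset by blast
  qed simp
  obtain n e0 \<delta> where \<delta>: "\<delta> > 0" "ball e0 \<delta> \<subseteq> closure (S n)"
    using baire_nat[of "\<lambda>n. closure (S n)"] un by auto
  define \<rho>0 where "\<rho>0 = r / (real n + 1)"
  have \<rho>0: "0 < \<rho>0" "\<rho>0 \<le> r" using r by (auto simp: \<rho>0_def field_simps)
  have ext3: "\<exists>g. hext P c r \<xi> e' (\<rho>0/3) (real n + 1) g" if "e' \<in> ball e0 \<delta>" for e'
  proof (rule closure_ext[OF nr \<rho>0 holo])
    show "e' \<in> closure {e. \<exists>g. hext P c r \<xi> e \<rho>0 (real n + 1) g}"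
      using \<delta>(2) that by (auto simp: S_def \<rho>0_def)
  qed
  have ex: "\<exists>g. hext P c r \<xi> e (\<rho>0/3) (4 * (real n + 1) / \<delta> * norm e) g" for e
    by (rule scale_ext[OF \<delta>(1) _ ext3]) simp_all
  have rho3: "0 < \<rho>0/3" "\<rho>0/3 \<le> r" using \<rho>0 by auto
  obtain Q where Q: "banach_holomorphic_on Q (ball c r \<union> ball \<xi> (\<rho>0/3/3))"
      "\<forall>z\<in>ball c r \<union> ball \<xi> (\<rho>0/3/3). is_hom (Q z)" "\<forall>z\<in>ball c r. Q z = P z"
    using main_construct[OF nr rho3 hom holo _ ex] \<delta>(1) by auto
  show ?thesis
    by (rule exI[of _ "ball \<xi> (\<rho>0/3/3)"], rule exI[of _ Q]) (use Q \<rho>0 in auto)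
qed

end
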